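(* Let $L:\mathbb{T}^d\times\mathbb{R}^d\to\mathbb{R}$ be continuous with $\lim_{|v|\to\infty}\inf_{x\in\mathbb{T}^d}L(x,v)/|v|=+\infty$, and let $(\varphi,\overline{H})$ be a viscosity solution to $H(x,-\nabla\varphi)=\overline{H}$. Then for every $r>0$, $T_r^+\varphi=\varphi-r\overline{H}$. Moreover, given $\varepsilon>0$, there exists $\varkappa_0>0$ such that for all $\varkappa\in(0,\varkappa_0]$, $r>0$ and $y\in\mathbb{T}^d$, \[\limsup_{d(\Delta)\downarrow0}\Big[\varphi(x_{y,\varkappa,r,\Delta}(r))+\int_0^rL(x_{y,\varkappa,r,\Delta}(t),v_{y,\varkappa,r,\Delta}(t))\,dt\Big]\le\varphi(y)-\overline{H}r+(r+1)\varepsilon,\] the limsup being over partitions $\Delta$ of $[0,r]$ with fineness tending to $0$.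
   Context: $\mathbb{T}^d=\mathbb{R}^d/\mathbb{Z}^d$; $x+v$ is the translate of $x\in\mathbb{T}^d$ by $v\in\mathbb{R}^d$. $H(x,p)=\max_{v\in\mathbb{R}^d}[pv-L(x,v)]$. Hadamard sub/superdifferentials: $p\in\partial_D^\mp\varphi(x)$ iff for all $w$, $\liminf_{h\downarrow0,w'\to w}\frac{\varphi(x+hw')-\varphi(x)}{h}\ge pw$ (resp. $\limsup\ldots\le pw$). $(\varphi,\overline{H})$, $\varphi$ continuous, $\overline{H}\in\mathbb{R}$, is a viscosity solution if $H(x,-p)\le\overline{H}$ for all $p\in\partial_D^+\varphi(x)$ and $H(x,-p)\ge\overline{H}$ for all $p\in\partial_D^-\varphi(x)$, for all $x$. A controlled process on $[0,r]$ is $(x(\cdot),v(\cdot))$ with $v\in L^1([0,r];\mathbb{R}^d)$, $x\in C([0,r];\mathbb{T}^d)$, $x(s)=x(0)+\int_0^sv\,dt$. Lax–Oleinik: $T_r^+\phi(y)=\inf\{\phi(x(r))+\int_0^rL(x(t),v(t))dt:(x,v)$ controlled process on $[0,r]$, $x(0)=y\}$. Feedback: $\varphi_\varkappa(x)=\inf_v\{\varphi(x+v)+\frac{1}{2\varkappa^2}|v|^2\}$; $b_\varkappa[x]$ a chosen minimizer, $p_\varkappa[x]=\frac1{\varkappa^2}(-b_\varkappa[x])^\top$, $\mathbbm{v}_\varkappa[x]\in\operatorname{Argmax}_v[-p_\varkappa[x]v-L(x+b_\varkappa[x],v)]$. For a partition $\Delta=\{t_i\}_{i=0}^n$ of $[0,r]$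 with fineness $d(\Delta)=\max_i(t_{i+1}-t_i)$: $x_{y,\varkappa,r,\Delta}(0)=y$, and on $[t_i,t_{i+1})$, $v_{y,\varkappa,r,\Delta}(t)=\mathbbm{v}_\varkappa[x_{y,\varkappa,r,\Delta}(t_i)]$, $x_{y,\varkappa,r,\Delta}(t)=x_{y,\varkappa,r,\Delta}(t_i)+(t-t_i)\mathbbm{v}_\varkappa[x_{y,\varkappa,r,\Delta}(t_i)]$. *)

theory Defs
  imports "HOL-Analysis.Analysis"
begin

text \<open>The torus T^d = R^d / Z^d is modelled through its universal cover R^d = real^'d:
  functions on T^d are Z^d-periodic functions on R^d, and translation x+v is vector addition.\<close>

definition zvec :: "real^'d \<Rightarrow> bool" where
  "zvec k \<longleftrightarrow> (\<forall>i. k $ i \<in> \<int>)"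

definition periodic :: "(real^'d \<Rightarrow> 'b) \<Rightarrow> bool" where
  "periodic f \<longleftrightarrow> (\<forall>x k. zvec k \<longrightarrow> f (x + k) = f x)"

definition hamiltonian :: "(real^'d \<Rightarrow> real^'d \<Rightarrow> real) \<Rightarrow> real^'d \<Rightarrow> real^'d \<Rightarrow> real" where
  "hamiltonian L x p = (SUP v. p \<bullet> v - L x v)"

definition hadamard_subdiff :: "(real^'d \<Rightarrow> real) \<Rightarrow> real^'d \<Rightarrow> (real^'d) set" where
  "hadamard_subdiff \<phi> x = {p. \<forall>w.
      Liminf (at_right 0 \<times>\<^sub>F nhds w) (\<lambda>(h, w'). ereal ((\<phi> (x + h *\<^sub>R w') - \<phi> x) / h))
        \<ge> ereal (p \<bullet> w)}"

definition hadamard_superdiff :: "(real^'d \<Rightarrow> real) \<Rightarrow> real^'d \<Rightarrow> (real^'d) set" where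
  "hadamard_superdiff \<phi> x = {p. \<forall>w.
      Limsup (at_right 0 \<times>\<^sub>F nhds w) (\<lambda>(h, w'). ereal ((\<phi> (x + h *\<^sub>R w') - \<phi> x) / h))
        \<le> ereal (p \<bullet> w)}"

definition viscosity_solution ::
  "(real^'d \<Rightarrow> real^'d \<Rightarrow> real) \<Rightarrow> (real^'d \<Rightarrow> real) \<Rightarrow> real \<Rightarrow> bool" where
  "viscosity_solution L \<phi> Hbar \<longleftrightarrow>
     continuous_on UNIV \<phi> \<and> periodic \<phi> \<and>
     (\<forall>x. \<forall>p \<in> hadamard_superdiff \<phi> x. hamiltonian L x (- p) \<le> Hbar) \<and>
     (\<forall>x. \<forall>p \<in> hadamard_subdiff \<phi> x. hamiltonian L x (- p) \<ge> Hbar)"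

text \<open>A controlled process from y is given by an L^1 control v on [0,r],
  with (lifted) trajectory x(s) = y + \<integral>_0^s v. Controls for which the running cost is not
  integrable have cost +\<infinity> (L is bounded below) and do not affect the infimum.\<close>
definition lax_oleinik ::
  "(real^'d \<Rightarrow> real^'d \<Rightarrow> real) \<Rightarrow> real \<Rightarrow> (real^'d \<Rightarrow> real) \<Rightarrow> real^'d \<Rightarrow> ereal" where
  "lax_oleinik L r \<phi> y = Inf {ereal (\<phi> (y + integral {0..r} v)
        + integral {0..r} (\<lambda>t. L (y + integral {0..t} v) (v t))) | v.
        v absolutely_integrable_on {0..r} \<and>
        (\<lambda>t. L (y + integral {0..t} v) (v t)) absolutely_integrable_on {0..r}}"

definition is_partition :: "real \<Rightarrow> nat \<Rightarrow> (nat \<Rightarrow> real) \<Rightarrow> bool" where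
  "is_partition r n t \<longleftrightarrow> t 0 = 0 \<and> t n = r \<and> (\<forall>i<n. t i < t (Suc i))"

definition fineness :: "nat \<Rightarrow> (nat \<Rightarrow> real) \<Rightarrow> real" where
  "fineness n t = Max {t (Suc i) - t i | i. i < n}"

primrec knots :: "(real^'d \<Rightarrow> real^'d) \<Rightarrow> real^'d \<Rightarrow> (nat \<Rightarrow> real) \<Rightarrow> nat \<Rightarrow> real^'d" where
  "knots F y t 0 = y"
| "knots F y t (Suc i) = knots F y t i + (t (Suc i) - t i) *\<^sub>R F (knots F y t i)"

text \<open>Index i with s \<in> [t_i, t_{i+1}) (and i = n-1 for s = r).\<close>
definition seg_index :: "nat \<Rightarrow> (nat \<Rightarrow> real) \<Rightarrow> real \<Rightarrow> nat" where
  "seg_index n t s = Max {i. i < n \<and> t i \<le> s}"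

definition feedback_v :: "(real^'d \<Rightarrow> real^'d) \<Rightarrow> real^'d \<Rightarrow> nat \<Rightarrow> (nat \<Rightarrow> real) \<Rightarrow> real \<Rightarrow> real^'d" where
  "feedback_v F y n t s = F (knots F y t (seg_index n t s))"

definition feedback_x :: "(real^'d \<Rightarrow> real^'d) \<Rightarrow> real^'d \<Rightarrow> nat \<Rightarrow> (nat \<Rightarrow> real) \<Rightarrow> real \<Rightarrow> real^'d" where
  "feedback_x F y n t s = knots F y t (seg_index n t s)
      + (s - t (seg_index n t s)) *\<^sub>R F (knots F y t (seg_index n t s))"

definition feedback_cost ::
  "(real^'d \<Rightarrow> real^'d \<Rightarrow> real) \<Rightarrow> (real^'d \<Rightarrow> real) \<Rightarrow> (real^'d \<Rightarrow> real^'d)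
     \<Rightarrow> real^'d \<Rightarrow> real \<Rightarrow> nat \<Rightarrow> (nat \<Rightarrow> real) \<Rightarrow> real" where
  "feedback_cost L \<phi> F y r n t = \<phi> (feedback_x F y n t r)
      + integral {0..r} (\<lambda>s. L (feedback_x F y n t s) (feedback_v F y n t s))"

definition limsup_fine :: "real \<Rightarrow> (nat \<Rightarrow> (nat \<Rightarrow> real) \<Rightarrow> real) \<Rightarrow> ereal" where
  "limsup_fine r f = (INF \<rho>\<in>{0<..}. Sup {ereal (f n t) | n t. is_partition r n t \<and> fineness n t < \<rho>})"

end

theory Submission
  imports Defs
begin


lemma torus_rep:
  fixes x :: "real^'d"
  shows "\<exists>k. zvec k \<and> x - k \<in> cbox 0 1"
proof -
  define k :: "real^'d" where "k = (\<chi> i. of_int (floor (x$i)))"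
  have "zvec k" unfolding zvec_def k_def by auto
  moreover have "x - k \<in> cbox 0 1"
    unfolding mem_box_cart k_def
    by (auto simp: of_int_floor_le) (smt (verit) real_of_int_floor_add_one_gt)
  ultimately show ?thesis by blast
qed

lemma box_widen: "(x::real^'d) \<in> cbox 0 1 \<Longrightarrow> x \<in> cbox (-1) 2"
  unfolding mem_box_cart by (auto; smt (verit))

lemma periodic_shift: "periodic f \<Longrightarrow> zvec k \<Longrightarrow> f (x - k) = f x"
  unfolding periodic_def by (metis diff_add_cancel)

lemma F_facts:
  fixes w :: "real^'d"
  defines "F \<equiv> at_right (0::real) \<times>\<^sub>F nhds w"
  shows "F \<noteq> bot" "eventually (\<lambda>p. fst p > 0) F"
    "((\<lambda>p. ereal (q \<bullet> snd p + c * fst p * (norm (snd p))\<^sup>2)) \<longlongrightarrow> ereal (q \<bullet> w)) F"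
proof -
  show "F \<noteq> bot" unfolding F_def prod_filter_eq_bot by simp
  have "eventually (\<lambda>(h::real, w'::real^'d). h > 0) F"
    unfolding F_def by (subst eventually_prod1) (auto simp: eventually_at_right_less)
  then show "eventually (\<lambda>p. fst p > 0) F" by (rule eventually_mono) (auto split: prod.splits)
  have f: "(fst \<longlongrightarrow> 0) F" unfolding F_def
    by (rule filterlim_mono[OF filterlim_fst at_within_le_nhds order_refl])
  have s: "(snd \<longlongrightarrow> w) F" unfolding F_def by (rule filterlim_snd)
  have "((\<lambda>p. q \<bullet> snd p + c * fst p * (norm (snd p))\<^sup>2) \<longlongrightarrow> q \<bullet> w + c * 0 * (norm w)\<^sup>2) F"
    by (intro tendsto_intros f s)
  then show "((\<lambda>p. ereal (q \<bullet> snd p + c * fst p * (norm (snd p))\<^sup>2)) \<longlongrightarrow> ereal (q \<bullet> w)) F"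
    by (intro tendsto_intros) simp
qed

lemma superdiff_intro:
  fixes \<phi> :: "real^'d \<Rightarrow> real"
  assumes "\<And>u. \<phi> (z + u) \<le> \<phi> z + q \<bullet> u + c * (norm u)\<^sup>2"
  shows "q \<in> hadamard_superdiff \<phi> z"
  unfolding hadamard_superdiff_def
proof (clarify)
  fix w :: "real^'d"
  let ?F = "at_right (0::real) \<times>\<^sub>F nhds w"
  have "Limsup ?F (\<lambda>(h, w'). ereal ((\<phi> (z + h *\<^sub>R w') - \<phi> z) / h))
     \<le> Limsup ?F (\<lambda>p. ereal (q \<bullet> snd p + c * fst p * (norm (snd p))\<^sup>2))"
  proof (rule Limsup_mono, rule eventually_mono[OF F_facts(2)], clarsimp)
    fix h :: real and w' :: "real^'d" assume h: "0 < h"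
    have "\<phi> (z + h *\<^sub>R w') - \<phi> z \<le> h * (q \<bullet> w' + c * h * (norm w')\<^sup>2)"
      using assms[of "h *\<^sub>R w'"] h by (simp add: algebra_simps power2_eq_square)
    then show "(\<phi> (z + h *\<^sub>R w') - \<phi> z) / h \<le> q \<bullet> w' + c * h * (norm w')\<^sup>2"
      using h by (simp add: divide_le_eq mult.commute)
  qed
  also have "\<dots> = ereal (q \<bullet> w)"
    by (rule lim_imp_Limsup) (use F_facts in auto)
  finally show "Limsup ?F (\<lambda>(h, w'). ereal ((\<phi> (z + h *\<^sub>R w') - \<phi> z) / h)) \<le> ereal (q \<bullet> w)" .
qed

lemma subdiff_intro:
  fixes \<phi> :: "real^'d \<Rightarrow> real"
  assumes "\<And>u. \<phi> z + q \<bullet> u - c * (norm u)\<^sup>2 \<le> \<phi> (z + u)"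
  shows "q \<in> hadamard_subdiff \<phi> z"
  unfolding hadamard_subdiff_def
proof (clarify)
  fix w :: "real^'d"
  let ?F = "at_right (0::real) \<times>\<^sub>F nhds w"
  have "ereal (q \<bullet> w) = Liminf ?F (\<lambda>p. ereal (q \<bullet> snd p + (-c) * fst p * (norm (snd p))\<^sup>2))"
    by (rule lim_imp_Liminf[symmetric]) (use F_facts(1) F_facts(3)[where q=q and c="-c"] in auto)
  also have "\<dots> \<le> Liminf ?F (\<lambda>(h, w'). ereal ((\<phi> (z + h *\<^sub>R w') - \<phi> z) / h))"
  proof (rule Liminf_mono, rule eventually_mono[OF F_facts(2)], clarsimp)
    fix h :: real and w' :: "real^'d" assume h: "0 < h"
    have "h * (q \<bullet> w' - c * h * (norm w')\<^sup>2) \<le> \<phi> (z + h *\<^sub>R w') - \<phi> z"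
      using assms[of "h *\<^sub>R w'"] h by (simp add: algebra_simps power2_eq_square)
    then show "q \<bullet> w' - c * h * (norm w')\<^sup>2 \<le> (\<phi> (z + h *\<^sub>R w') - \<phi> z) / h"
      using h by (simp add: le_divide_eq mult.commute)
  qed
  finally show "ereal (q \<bullet> w) \<le> Liminf ?F (\<lambda>(h, w'). ereal ((\<phi> (z + h *\<^sub>R w') - \<phi> z) / h))" .
qed

lemma norm_upper:
  fixes a u :: "real^'d"
  assumes "a \<noteq> 0"
  shows "norm (a + u) \<le> norm a + (a /\<^sub>R norm a) \<bullet> u + (norm u)\<^sup>2 / (2 * norm a)"
proof -
  define n where "n = norm a"
  have n: "n > 0" using assms unfolding n_def by simp
  define s where "s = (a \<bullet> u) / n"
  have s_eq: "(a /\<^sub>R norm a) \<bullet> u = s" unfolding s_def n_def by (simp add: divide_inverse mult.commute)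
  have "\<bar>a \<bullet> u\<bar> \<le> n * norm u" unfolding n_def by (rule Cauchy_Schwarz_ineq2)
  then have su: "- norm u \<le> s" unfolding s_def using n by (simp add: field_simps abs_le_iff)
  have "n - norm u + (norm u)\<^sup>2 / (2 * n) = (n\<^sup>2 + (n - norm u)\<^sup>2) / (2 * n)"
    using n by (simp add: field_simps power2_eq_square)
  also have "\<dots> \<ge> 0" using n by simp
  finally have pos: "0 \<le> n + s + (norm u)\<^sup>2 / (2 * n)" using su by linarith
  have "(norm (a + u))\<^sup>2 = n\<^sup>2 + 2 * (a \<bullet> u) + (norm u)\<^sup>2"
    unfolding n_def by (simp add: power2_norm_eq_inner inner_add_left inner_add_right inner_commute)
  also have "\<dots> = n\<^sup>2 + 2 * n * s + (norm u)\<^sup>2" unfolding s_def using n by simp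
  also have "\<dots> \<le> (n + s + (norm u)\<^sup>2 / (2 * n))\<^sup>2"
  proof -
    have "(n + s + (norm u)\<^sup>2 / (2 * n))\<^sup>2 = n\<^sup>2 + 2 * n * s + (norm u)\<^sup>2 + (s + (norm u)\<^sup>2 / (2 * n))\<^sup>2"
      using n by (simp add: field_simps power2_eq_square)
    then show ?thesis by simp
  qed
  finally have "norm (a + u) \<le> n + s + (norm u)\<^sup>2 / (2 * n)"
    using pos by (rule power2_le_imp_le)
  then show ?thesis unfolding s_eq n_def .
qed

locale setting =
  fixes L :: "real^'d \<Rightarrow> real^'d \<Rightarrow> real"
    and \<phi> :: "real^'d \<Rightarrow> real"
    and Hbar :: real
  assumes L_cont: "continuous_on UNIV (\<lambda>(x, v). L x v)"
    and L_per: "\<And>v. periodic (\<lambda>x. L x v)"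
    and L_superlin: "filterlim (\<lambda>v. (INF x. L x v) / norm v) at_top at_infinity"
    and visc: "viscosity_solution L \<phi> Hbar"
begin

lemma phi_cont: "continuous_on UNIV \<phi>" and phi_per: "periodic \<phi>"
  using visc unfolding viscosity_solution_def by auto

lemma phi_bounded: "\<exists>B. \<forall>x. \<bar>\<phi> x\<bar> \<le> B"
proof -
  have "compact (\<phi> ` cbox 0 1)"
    by (rule compact_continuous_image) (auto intro: continuous_on_subset[OF phi_cont])
  then obtain B where B: "\<And>y. y \<in> \<phi> ` cbox 0 1 \<Longrightarrow> norm y \<le> B"
    using compact_imp_bounded bounded_iff by metis
  show ?thesis
  proof (intro exI allI)
    fix x :: "real^'d"
    obtain k where k: "zvec k" "x - k \<in> cbox 0 1" using torus_rep by blast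
    have "\<phi> x = \<phi> (x - k)" using periodic_shift[OF phi_per k(1)] by simp
    then show "\<bar>\<phi> x\<bar> \<le> B" using B[of "\<phi> (x - k)"] k by auto
  qed
qed

lemma L_cont_v: "continuous_on UNIV (L x)"
proof -
  have "continuous_on UNIV ((\<lambda>(x, v). L x v) \<circ> (\<lambda>w. (x, w)))"
    by (rule continuous_on_compose) (auto intro: continuous_intros continuous_on_subset[OF L_cont])
  then show ?thesis by (simp add: o_def)
qed

lemma L_comp:
  assumes "continuous_on S f" "continuous_on S g"
  shows "continuous_on S (\<lambda>s. L (f s) (g s))"
proof -
  have "continuous_on S ((\<lambda>(x, v). L x v) \<circ> (\<lambda>s. (f s, g s)))"
    by (rule continuous_on_compose) (auto intro: continuous_on_Pair assms continuous_on_subset[OF L_cont])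
  then show ?thesis by (simp add: o_def)
qed

lemma L_bounded: "\<exists>B. \<forall>x v. norm v \<le> M \<longrightarrow> \<bar>L x v\<bar> \<le> B"
proof -
  have "compact ((\<lambda>(x, v). L x v) ` (cbox 0 1 \<times> cball 0 M))"
    by (rule compact_continuous_image) (auto intro: continuous_on_subset[OF L_cont] compact_Times)
  then obtain B where B: "\<And>y. y \<in> (\<lambda>(x, v). L x v) ` (cbox 0 1 \<times> cball 0 M) \<Longrightarrow> norm y \<le> B"
    using compact_imp_bounded bounded_iff by metis
  show ?thesis
  proof (intro exI allI impI)
    fix x v :: "real^'d" assume v: "norm v \<le> M"
    obtain k where k: "zvec k" "x - k \<in> cbox 0 1" using torus_rep by blast
    have "L x v = L (x - k) v" using periodic_shift[OF L_per k(1)] by simp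
    then show "\<bar>L x v\<bar> \<le> B" using B[of "L (x - k) v"] k v by force
  qed
qed

lemma L_uc: assumes "\<epsilon> > 0"
  shows "\<exists>\<delta>>0. \<forall>x x' v. norm v \<le> M \<longrightarrow> dist x x' < \<delta> \<longrightarrow> \<bar>L x v - L x' v\<bar> < \<epsilon>"
proof -
  let ?K = "cbox (-1) 2 \<times> cball 0 M :: ((real^'d) \<times> (real^'d)) set"
  have "uniformly_continuous_on ?K (\<lambda>(x, v). L x v)"
    by (rule compact_uniformly_continuous) (auto intro: continuous_on_subset[OF L_cont] compact_Times)
  then obtain d where d: "d > 0" and
    dd: "\<And>a b. a \<in> ?K \<Longrightarrow> b \<in> ?K \<Longrightarrow> dist b a < d \<Longrightarrow> dist ((\<lambda>(x, v). L x v) b) ((\<lambda>(x, v). L x v) a) < \<epsilon>"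
    unfolding uniformly_continuous_on_def using assms by metis
  show ?thesis
  proof (intro exI[of _ "min d 1"] conjI allI impI)
    fix x x' v :: "real^'d" assume v: "norm v \<le> M" and xx: "dist x x' < min d 1"
    obtain k where k: "zvec k" "x - k \<in> cbox 0 1" using torus_rep by blast
    have "x' - k \<in> cbox (-1) 2"
      unfolding mem_box_cart
    proof
      fix i
      have "\<bar>x$i - x'$i\<bar> \<le> norm (x - x')"
        using component_le_norm_cart[of "x - x'" i] by simp
      also have "\<dots> < 1" using xx by (simp add: dist_norm)
      finally have a: "\<bar>x$i - x'$i\<bar> < 1" .
      have "0 \<le> x$i - k$i \<and> x$i - k$i \<le> 1" using k(2) unfolding mem_box_cart by auto
      then show "(-1::real^'d)$i \<le> (x' - k)$i \<and> (x' - k)$i \<le> 2$i" using a by auto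
    qed
    moreover have "x - k \<in> cbox (-1) 2" using k(2) by (rule box_widen)
    moreover have "dist (x' - k, v) (x - k, v) < d" using xx by (simp add: dist_Pair_Pair dist_norm norm_minus_commute)
    ultimately have "dist (L (x' - k) v) (L (x - k) v) < \<epsilon>" using dd[of "(x - k, v)" "(x' - k, v)"] v by auto
    then show "\<bar>L x v - L x' v\<bar> < \<epsilon>"
      using periodic_shift[OF L_per k(1)] by (simp add: dist_real_def abs_minus_commute)
  qed (use d in auto)
qed

lemma superlin: "\<exists>C. \<forall>x w. R * norm w - C \<le> L x w"
proof -
  have "eventually (\<lambda>v. R \<le> (INF x. L x v) / norm v) at_infinity"
    using L_superlin[unfolded filterlim_at_top] by blast
  then obtain b where b: "\<And>v. b \<le> norm v \<Longrightarrow> R \<le> (INF x. L x v) / norm v"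
    unfolding eventually_at_infinity by blast
  define M where "M = max b 1"
  obtain B where B: "\<And>x v. norm v \<le> M \<Longrightarrow> \<bar>L x v\<bar> \<le> B" using L_bounded by blast
  show ?thesis
  proof (intro exI allI)
    fix x w :: "real^'d"
    show "R * norm w - (B + \<bar>R\<bar> * M) \<le> L x w"
    proof (cases "norm w \<le> M")
      case True
      then have "R * norm w \<le> \<bar>R\<bar> * M"
        by (smt (verit, best) mult_mono abs_ge_self norm_ge_zero abs_ge_zero mult_left_mono)
      then show ?thesis using B[OF True, of x] by linarith
    next
      case False
      then have nw: "norm w > 0" "b \<le> norm w" unfolding M_def by auto
      obtain B' where B': "\<And>x v. norm v \<le> norm w \<Longrightarrow> \<bar>L x v\<bar> \<le> B'" using L_bounded by blast
      have bdd: "bdd_below (range (\<lambda>x. L x w))"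
      proof (rule bdd_belowI[of _ "-B'"], clarsimp)
        fix y show "- B' \<le> L y w" using B'[of w y] by simp
      qed
      have "R * norm w \<le> (INF x. L x w)"
        using b[OF nw(2)] nw(1) by (simp add: pos_le_divide_eq)
      also have "\<dots> \<le> L x w" by (rule cINF_lower[OF bdd]) simp
      finally have "R * norm w \<le> L x w" .
      moreover have "0 \<le> B + \<bar>R\<bar> * M"
      proof -
        have "0 \<le> M" unfolding M_def by auto
        then have "\<bar>L x 0\<bar> \<le> B" "0 \<le> \<bar>R\<bar> * M" using B[of 0 x] by auto
        then show ?thesis by linarith
      qed
      ultimately show ?thesis by linarith
    qed
  qed
qed

lemma ham_bdd: "bdd_above (range (\<lambda>v. p \<bullet> v - L x v))"
proof -
  obtain C where C: "\<And>x w. norm p * norm w - C \<le> L x w" using superlin by blast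
  show ?thesis
  proof (rule bdd_aboveI[of _ C], clarsimp)
    fix v
    have "p \<bullet> v \<le> norm p * norm v" by (rule norm_cauchy_schwarz)
    then show "p \<bullet> v - L x v \<le> C" using C[of v x] by linarith
  qed
qed

lemma ham_le: "hamiltonian L x p \<le> c \<Longrightarrow> p \<bullet> v - L x v \<le> c"
proof -
  assume a: "hamiltonian L x p \<le> c"
  have "p \<bullet> v - L x v \<le> hamiltonian L x p" unfolding hamiltonian_def
    by (rule cSUP_upper[OF UNIV_I ham_bdd])
  then show ?thesis using a by linarith
qed

lemma ham_ge: "c \<le> hamiltonian L x p \<Longrightarrow> (\<And>w. p \<bullet> w - L x w \<le> p \<bullet> v - L x v) \<Longrightarrow> c \<le> p \<bullet> v - L x v"
  unfolding hamiltonian_def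
  by (meson cSUP_least UNIV_not_empty order_trans)

lemma argmax_bound: "\<exists>M. \<forall>x p V. norm p \<le> R \<longrightarrow> (\<forall>w. p \<bullet> w - L x w \<le> p \<bullet> V - L x V) \<longrightarrow> norm V \<le> M"
proof -
  obtain C where C: "\<And>x w. (R + 1) * norm w - C \<le> L x w" using superlin by blast
  obtain B where B: "\<And>x v. norm v \<le> 0 \<Longrightarrow> \<bar>L x v\<bar> \<le> B" using L_bounded by blast
  show ?thesis
  proof (intro exI allI impI)
    fix x p V :: "real^'d"
    assume p: "norm p \<le> R" and mx: "\<forall>w. p \<bullet> w - L x w \<le> p \<bullet> V - L x V"
    have "- L x 0 \<le> p \<bullet> V - L x V" using mx[rule_format, of 0] by simp
    moreover have "p \<bullet> V \<le> R * norm V"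
      using norm_cauchy_schwarz[of p V] mult_right_mono[OF p norm_ge_zero[of V]] by linarith
    moreover have "\<bar>L x 0\<bar> \<le> B" using B by simp
    moreover note C[of V x]
    ultimately show "norm V \<le> C + B" by (simp add: algebra_simps)
  qed
qed

lemma argmax_exists: "\<exists>V. \<forall>w. p \<bullet> w - L x w \<le> p \<bullet> V - L x V"
proof -
  obtain C where C: "\<And>x w. (norm p + 1) * norm w - C \<le> L x w" using superlin by blast
  define R where "R = C + \<bar>L x 0\<bar> + 1"
  have "-C \<le> L x 0" using C[of 0 x] by simp
  then have "0 \<le> R" unfolding R_def using abs_ge_minus_self[of "L x 0"] by linarith
  have "\<exists>V\<in>cball 0 R. \<forall>w\<in>cball 0 R. p \<bullet> w - L x w \<le> p \<bullet> V - L x V"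
    using \<open>0 \<le> R\<close> by (intro continuous_attains_sup)
      (auto intro!: continuous_intros continuous_on_subset[OF L_cont_v] simp: R_def)
  then obtain V where V: "V \<in> cball 0 R" "\<And>w. w \<in> cball 0 R \<Longrightarrow> p \<bullet> w - L x w \<le> p \<bullet> V - L x V"
    by blast
  have "0 \<in> cball 0 R" using \<open>0 \<le> R\<close> by simp
  from V(2)[OF this] have V0: "- L x 0 \<le> p \<bullet> V - L x V" by simp
  show ?thesis
  proof (intro exI allI)
    fix w
    show "p \<bullet> w - L x w \<le> p \<bullet> V - L x V"
    proof (cases "w \<in> cball 0 R")
      case True then show ?thesis by (rule V(2))
    next
      case False
      have "p \<bullet> w \<le> norm p * norm w" by (rule norm_cauchy_schwarz)
      moreover have "norm w > R" using False by simp
      moreover note C[of w x]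
      ultimately have "p \<bullet> w - L x w \<le> C - norm w" by (simp add: algebra_simps)
      also have "\<dots> \<le> - L x 0" using \<open>norm w > R\<close> unfolding R_def by linarith
      finally show ?thesis using V0 by linarith
    qed
  qed
qed

lemma superdiff_bound: "\<exists>K0. \<forall>x p. p \<in> hadamard_superdiff \<phi> x \<longrightarrow> norm p \<le> K0"
proof -
  obtain B where B: "\<And>x v. norm v \<le> 1 \<Longrightarrow> \<bar>L x v\<bar> \<le> B" using L_bounded by blast
  show ?thesis
  proof (intro exI[of _ "\<bar>Hbar\<bar> + B"] allI impI)
    fix x p assume p: "p \<in> hadamard_superdiff \<phi> x"
    have H: "hamiltonian L x (- p) \<le> Hbar" using visc p unfolding viscosity_solution_def by blast
    show "norm p \<le> \<bar>Hbar\<bar> + B"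
    proof (cases "p = 0")
      case True then show ?thesis using B[of 0 x] by simp
    next
      case False
      define v where "v = - (p /\<^sub>R norm p)"
      have nv: "norm v \<le> 1" unfolding v_def using False by simp
      have "(- p) \<bullet> v = norm p" unfolding v_def using False
        by (simp add: power2_norm_eq_inner[symmetric] power2_eq_square)
      then have "norm p - L x v \<le> Hbar" using ham_le[OF H, of v] by simp
      then show ?thesis using B[OF nv, of x] by linarith
    qed
  qed
qed

lemma phi_lip: "\<exists>K>0. \<forall>x y. \<phi> x - \<phi> y \<le> K * norm (x - y)"
proof -
  obtain K0 where K0: "\<And>x p. p \<in> hadamard_superdiff \<phi> x \<Longrightarrow> norm p \<le> K0"
    using superdiff_bound by blast
  obtain B where B: "\<And>x. \<bar>\<phi> x\<bar> \<le> B" using phi_bounded by blast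
  define K where "K = max K0 0 + 1"
  have K: "K > 0" "K > K0" unfolding K_def by auto
  have "\<phi> x - \<phi> x0 \<le> K * norm (x - x0)" for x x0
  proof (rule ccontr)
    assume bad: "\<not> ?thesis"
    define g where "g y = \<phi> y - K * norm (y - x0)" for y
    define R where "R = 2 * B / K + 1"
    have B0: "0 \<le> B" using B[of x0] by simp
    then have R0: "0 \<le> R" unfolding R_def using K by simp
    have "\<exists>x1\<in>cball x0 R. \<forall>y\<in>cball x0 R. g y \<le> g x1" unfolding g_def using R0
      by (intro continuous_attains_sup) (auto intro!: continuous_intros continuous_on_subset[OF phi_cont])
    then obtain x1 where x1: "x1 \<in> cball x0 R" "\<And>y. y \<in> cball x0 R \<Longrightarrow> g y \<le> g x1" by blast
    have gmax: "g y \<le> g x1" for y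
    proof (cases "y \<in> cball x0 R")
      case True then show ?thesis by (rule x1(2))
    next
      case False
      then have "norm (y - x0) > R" by (simp add: dist_norm norm_minus_commute)
      then have "K * norm (y - x0) \<ge> K * R" using K by simp
      moreover have "K * R = 2 * B + K" unfolding R_def using K by (simp add: field_simps)
      ultimately have "g y \<le> B - 2 * B - K" unfolding g_def using B[of y] by linarith
      also have "\<dots> < g x0" unfolding g_def using B[of x0] K by simp
      also have "\<dots> \<le> g x1" using x1(2)[of x0] R0 by simp
      finally show ?thesis by simp
    qed
    have "g x > g x0" using bad unfolding g_def by simp
    then have "x1 \<noteq> x0" using gmax[of x] by auto
    define a where "a = x1 - x0"
    have a: "a \<noteq> 0" using \<open>x1 \<noteq> x0\<close> unfolding a_def by simp
    have "K *\<^sub>R (a /\<^sub>R norm a) \<in> hadamard_superdiff \<phi> x1"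
    proof (rule superdiff_intro[where c = "K / (2 * norm a)"])
      fix u
      have "g (x1 + u) \<le> g x1" by (rule gmax)
      then have "\<phi> (x1 + u) \<le> \<phi> x1 + K * (norm (a + u) - norm a)"
        unfolding g_def a_def by (simp add: algebra_simps)
      also have "\<dots> \<le> \<phi> x1 + K * ((a /\<^sub>R norm a) \<bullet> u + (norm u)\<^sup>2 / (2 * norm a))"
        using norm_upper[OF a, of u] K by (simp add: mult_left_mono)
      finally show "\<phi> (x1 + u) \<le> \<phi> x1 + (K *\<^sub>R (a /\<^sub>R norm a)) \<bullet> u + K / (2 * norm a) * (norm u)\<^sup>2"
        by (simp add: algebra_simps)
    qed
    have "norm (K *\<^sub>R (a /\<^sub>R norm a)) = K" using a K by simp
    with K0[OF \<open>K *\<^sub>R (a /\<^sub>R norm a) \<in> hadamard_superdiff \<phi> x1\<close>] have "K \<le> K0" by simp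
    then show False using K by simp
  qed
  then show ?thesis using K by blast
qed

end


lemma part_has_integral:
  fixes t :: "nat \<Rightarrow> real" and f :: "real \<Rightarrow> 'a::banach"
  assumes "\<And>i. i < n \<Longrightarrow> t i \<le> t (Suc i)"
    and "\<And>i. i < n \<Longrightarrow> (f has_integral I i) {t i..t (Suc i)}"
  shows "t 0 \<le> t n \<and> (f has_integral (\<Sum>i<n. I i)) {t 0..t n}"
  using assms
proof (induction n)
  case 0
  then show ?case using has_integral_refl(1)[of f "t 0"] by simp
next
  case (Suc n)
  then have IH: "t 0 \<le> t n" "(f has_integral (\<Sum>i<n. I i)) {t 0..t n}" by auto
  have "(f has_integral ((\<Sum>i<n. I i) + I n)) {t 0..t (Suc n)}"
    by (rule has_integral_combine[OF IH(1) _ IH(2)]) (use Suc.prems in auto)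
  then show ?case using IH(1) Suc.prems(1)[of n] by (simp add: add.commute)
qed

lemma piecewise_integral:
  fixes g :: "real \<Rightarrow> 'a::euclidean_space"
  assumes mono: "\<And>i. i < n \<Longrightarrow> t i \<le> t (Suc i)"
    and pc: "\<And>i. i < n \<Longrightarrow> continuous_on {t i..t (Suc i)} (c i)"
    and eq: "\<And>i s. i < n \<Longrightarrow> t i \<le> s \<Longrightarrow> s < t (Suc i) \<Longrightarrow> g s = c i s"
  shows "(g has_integral (\<Sum>i<n. integral {t i..t (Suc i)} (c i))) {t 0..t n}"
    and "g absolutely_integrable_on {t 0..t n}"
proof -
  have p1: "(g has_integral integral {t i..t (Suc i)} (c i)) {t i..t (Suc i)}" if i: "i < n" for i
  proof (rule has_integral_spike_finite[of "{t (Suc i)}"])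
    show "(c i has_integral integral {t i..t (Suc i)} (c i)) {t i..t (Suc i)}"
      using integrable_continuous_interval[OF pc[OF i]] by (simp add: has_integral_integral)
  qed (use eq i in auto)
  have p2: "((\<lambda>s. norm (g s)) has_integral integral {t i..t (Suc i)} (\<lambda>s. norm (c i s))) {t i..t (Suc i)}"
    if i: "i < n" for i
  proof (rule has_integral_spike_finite[of "{t (Suc i)}"])
    have "continuous_on {t i..t (Suc i)} (\<lambda>s. norm (c i s))"
      by (intro continuous_intros pc i)
    then show "((\<lambda>s. norm (c i s)) has_integral integral {t i..t (Suc i)} (\<lambda>s. norm (c i s))) {t i..t (Suc i)}"
      using integrable_continuous_interval by (simp add: has_integral_integral)
  qed (use eq i in auto)
  show "(g has_integral (\<Sum>i<n. integral {t i..t (Suc i)} (c i))) {t 0..t n}"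
    using part_has_integral[of n t g, OF mono p1] by auto
  moreover have "((\<lambda>s. norm (g s)) has_integral (\<Sum>i<n. integral {t i..t (Suc i)} (\<lambda>s. norm (c i s)))) {t 0..t n}"
    using part_has_integral[of n t "\<lambda>s. norm (g s)", OF mono p2] by auto
  ultimately show "g absolutely_integrable_on {t 0..t n}"
    unfolding absolutely_integrable_on_def by blast
qed

lemma part_strict: "is_partition r n t \<Longrightarrow> j < k \<Longrightarrow> k \<le> n \<Longrightarrow> t j < t k"
proof (induction k)
  case 0 then show ?case by simp
next
  case (Suc k)
  then have "t k < t (Suc k)" unfolding is_partition_def by auto
  then show ?case using Suc by (cases "j = k") auto
qed

lemma part_mono: "is_partition r n t \<Longrightarrow> j \<le> k \<Longrightarrow> k \<le> n \<Longrightarrow> t j \<le> t k"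
  using part_strict[of r n t j k] by (cases "j = k") auto

lemma part_pos: "is_partition r n t \<Longrightarrow> 0 < r \<Longrightarrow> 0 < n"
  unfolding is_partition_def by (cases n) auto

lemma seg_index_eq:
  assumes p: "is_partition r n t" and i: "i < n" and s: "t i \<le> s" "s < t (Suc i)"
  shows "seg_index n t s = i"
proof -
  have "{j. j < n \<and> t j \<le> s} = {..i}"
  proof (intro set_eqI iffI)
    fix j assume "j \<in> {j. j < n \<and> t j \<le> s}"
    then have "j < n" "t j \<le> s" by auto
    show "j \<in> {..i}"
    proof (rule ccontr)
      assume "j \<notin> {..i}"
      then have "Suc i \<le> j" by simp
      then have "t (Suc i) \<le> t j" using part_mono[OF p _ ] \<open>j < n\<close> by simp
      then show False using s \<open>t j \<le> s\<close> by simp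
    qed
  next
    fix j assume "j \<in> {..i}"
    then show "j \<in> {j. j < n \<and> t j \<le> s}" using part_mono[OF p, of j i] i s by auto
  qed
  then show ?thesis unfolding seg_index_def by (simp, intro Max_eqI) auto
qed

lemma seg_index_r:
  assumes p: "is_partition r n t" and n: "0 < n"
  shows "seg_index n t r = n - 1"
proof -
  have "{j. j < n \<and> t j \<le> r} = {..<n}"
    using part_mono[OF p, of _ n] p unfolding is_partition_def by auto
  then show ?thesis unfolding seg_index_def using n
    by simp (intro Max_eqI, auto)
qed

lemma seg_index_cover:
  assumes p: "is_partition r n t" and r: "0 < r" and s: "0 \<le> s" "s \<le> r"
  shows "seg_index n t s < n \<and> t (seg_index n t s) \<le> s \<and> s \<le> t (Suc (seg_index n t s))"
proof (cases "s = r")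
  case True
  have n: "0 < n" using part_pos[OF p r] .
  then show ?thesis using True seg_index_r[OF p n] p part_mono[OF p, of "n - 1" n]
    unfolding is_partition_def by auto
next
  case False
  let ?A = "{j. j < n \<and> t j \<le> s}"
  have n: "0 < n" using part_pos[OF p r] .
  have fin: "finite ?A" by simp
  have ne: "0 \<in> ?A" using n s p unfolding is_partition_def by auto
  define i where "i = seg_index n t s"
  have iA: "i \<in> ?A" unfolding i_def seg_index_def using Max_in[OF fin] ne by blast
  have "s < t (Suc i)"
  proof (cases "Suc i < n")
    case True
    have "Suc i \<notin> ?A" unfolding i_def seg_index_def using Max_ge[OF fin] by fastforce
    then show ?thesis using True by auto
  next
    case False
    then have "Suc i = n" using iA by auto
    then show ?thesis using p False \<open>s \<noteq> r\<close> s unfolding is_partition_def by auto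
  qed
  then show ?thesis using iA unfolding i_def by auto
qed

lemma fineness_ge: "i < n \<Longrightarrow> t (Suc i) - t i \<le> fineness n t"
  unfolding fineness_def by (rule Max_ge) auto

lemma feedback_piece:
  assumes p: "is_partition r n t" and i: "i < n" and s: "t i \<le> s" "s < t (Suc i)"
  shows "feedback_x F y n t s = knots F y t i + (s - t i) *\<^sub>R F (knots F y t i)"
    and "feedback_v F y n t s = F (knots F y t i)"
  unfolding feedback_x_def feedback_v_def seg_index_eq[OF assms] by simp_all

lemma feedback_end:
  assumes p: "is_partition r n t" and r: "0 < r"
  shows "feedback_x F y n t r = knots F y t n"
proof -
  have n: "0 < n" using part_pos[OF p r] .
  then obtain m where m: "n = Suc m" by (cases n) auto
  show ?thesis unfolding feedback_x_def seg_index_r[OF p n] using m p unfolding is_partition_def by simp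
qed



lemma infconv_exists:
  fixes \<psi> :: "real^'d \<Rightarrow> real"
  assumes cont: "continuous_on UNIV \<psi>" and B: "\<And>x. \<bar>\<psi> x\<bar> \<le> B" and k: "\<kappa> > 0"
  shows "\<exists>b. \<forall>w. \<psi> (z + b) + (norm b)\<^sup>2 / (2 * \<kappa>\<^sup>2) \<le> \<psi> (z + w) + (norm w)\<^sup>2 / (2 * \<kappa>\<^sup>2)"
proof -
  define R where "R = 2 * \<kappa> * (B + 1)"
  have B0: "0 \<le> B" using B[of 0] by simp
  then have R0: "0 \<le> R" unfolding R_def using k by simp
  let ?g = "\<lambda>w. \<psi> (z + w) + (norm w)\<^sup>2 / (2 * \<kappa>\<^sup>2)"
  have "\<exists>b\<in>cball 0 R. \<forall>w\<in>cball 0 R. ?g b \<le> ?g w" using R0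
    by (intro continuous_attains_inf) (use k in \<open>auto intro!: continuous_intros continuous_on_compose2[OF cont]\<close>)
  then obtain b where b: "b \<in> cball 0 R" "\<And>w. w \<in> cball 0 R \<Longrightarrow> ?g b \<le> ?g w" by blast
  show ?thesis
  proof (intro exI allI)
    fix w
    show "?g b \<le> ?g w"
    proof (cases "w \<in> cball 0 R")
      case True then show ?thesis by (rule b(2))
    next
      case False
      then have nw: "norm w > R" by simp
      have "R\<^sup>2 \<le> (norm w)\<^sup>2" using nw R0 by (simp add: power_mono)
      moreover have "R\<^sup>2 / (2 * \<kappa>\<^sup>2) = 2 * (B + 1)\<^sup>2" unfolding R_def using k
        by (simp add: field_simps power2_eq_square)
      ultimately have "2 * (B + 1)\<^sup>2 \<le> (norm w)\<^sup>2 / (2 * \<kappa>\<^sup>2)"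
        using k by (metis divide_right_mono zero_le_numeral mult_nonneg_nonneg zero_le_power2)
      moreover have "2 * B + 2 \<le> 2 * (B + 1)\<^sup>2" using B0 by (simp add: power2_eq_square algebra_simps)
      ultimately have "?g 0 \<le> ?g w" using B[of "z + w"] B[of z] by simp
      also have "?g b \<le> ?g 0" using b(2)[of 0] R0 by simp
      finally show ?thesis by simp
    qed
  qed
qed

lemma norm_diff_scale_sq:
  fixes a v :: "'a::real_inner"
  shows "(norm (a - h *\<^sub>R v))\<^sup>2 = (norm a)\<^sup>2 - 2 * h * (a \<bullet> v) + h\<^sup>2 * (norm v)\<^sup>2"
  unfolding power2_norm_eq_inner
  by (simp add: inner_diff_left inner_diff_right inner_commute algebra_simps power2_eq_square)

context setting begin

lemma P2_core:
  fixes b V p :: "real^'d \<Rightarrow> real^'d"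
  assumes k: "\<kappa> > 0"
    and bmin: "\<And>x w. \<phi> (x + b x) + (norm (b x))\<^sup>2 / (2 * \<kappa>\<^sup>2) \<le> \<phi> (x + w) + (norm w)\<^sup>2 / (2 * \<kappa>\<^sup>2)"
    and vmax: "\<And>x w. (- p x) \<bullet> w - L (x + b x) w \<le> (- p x) \<bullet> V x - L (x + b x) (V x)"
    and pdef: "\<And>x. p x = (1 / \<kappa>\<^sup>2) *\<^sub>R (- b x)"
    and nb: "\<And>x. norm (b x) \<le> \<beta>"
    and nV: "\<And>x. norm (V x) \<le> M"
    and lip: "\<And>x y. \<phi> x - \<phi> y \<le> K * norm (x - y)" and K: "0 \<le> K"
    and uc: "\<And>x x' v. norm v \<le> M \<Longrightarrow> dist x x' < \<delta> \<Longrightarrow> L x' v \<le> L x v + \<epsilon>"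
    and part: "is_partition r n t" and r: "r > 0"
    and small: "\<beta> + fineness n t * M < \<delta>"
  shows "feedback_cost L \<phi> V y r n t
     \<le> \<phi> y - Hbar * r + r * \<epsilon> + K * \<beta> + r * fineness n t * M\<^sup>2 / (2 * \<kappa>\<^sup>2)"
proof -
  define X where "X = knots V y t"
  define \<rho> where "\<rho> = fineness n t"
  define m where "m x = \<phi> (x + b x) + (norm (b x))\<^sup>2 / (2 * \<kappa>\<^sup>2)" for x
  define c where "c i s = L (X i + (s - t i) *\<^sub>R V (X i)) (V (X i))" for i s
  define C where "C = - Hbar + \<epsilon> + \<rho> * M\<^sup>2 / (2 * \<kappa>\<^sup>2)"
  have k2: "\<kappa>\<^sup>2 > 0" using k by simp
  have M0: "0 \<le> M" using nV[of 0] norm_ge_zero order_trans by blast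
  have step: "m (X (Suc i)) + integral {t i..t (Suc i)} (c i) \<le> m (X i) + (t (Suc i) - t i) * C"
    if i: "i < n" for i
  proof -
    define z where "z = X i + b (X i)"
    define bb where "bb = b (X i)"
    define VV where "VV = V (X i)"
    define hh where "hh = t (Suc i) - t i"
    have hh0: "0 < hh" using part i unfolding is_partition_def hh_def by auto
    have hhr: "hh \<le> \<rho>" unfolding hh_def \<rho>_def using fineness_ge[OF i] .
    have XS: "X (Suc i) = X i + hh *\<^sub>R VV" unfolding X_def hh_def VV_def by simp
    have VVM: "norm VV \<le> M" unfolding VV_def by (rule nV)
    have bbb: "norm bb \<le> \<beta>" unfolding bb_def by (rule nb)
        have "m (X (Suc i)) \<le> \<phi> z + (norm (bb - hh *\<^sub>R VV))\<^sup>2 / (2 * \<kappa>\<^sup>2)"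
      using bmin[of "X (Suc i)" "bb - hh *\<^sub>R VV"] unfolding m_def XS z_def bb_def
      by (simp add: algebra_simps)
    also have "(norm (bb - hh *\<^sub>R VV))\<^sup>2 = (norm bb)\<^sup>2 - 2 * hh * (bb \<bullet> VV) + hh\<^sup>2 * (norm VV)\<^sup>2"
      by (rule norm_diff_scale_sq)
    also have "((norm bb)\<^sup>2 - 2 * hh * (bb \<bullet> VV) + hh\<^sup>2 * (norm VV)\<^sup>2) / (2 * \<kappa>\<^sup>2)
       = (norm bb)\<^sup>2 / (2 * \<kappa>\<^sup>2) - hh * (bb \<bullet> VV) / \<kappa>\<^sup>2 + hh\<^sup>2 * (norm VV)\<^sup>2 / (2 * \<kappa>\<^sup>2)"
      using k2 by (simp add: field_simps)
    finally have s1: "m (X (Suc i)) \<le> m (X i) - hh * (bb \<bullet> VV) / \<kappa>\<^sup>2 + hh\<^sup>2 * (norm VV)\<^sup>2 / (2 * \<kappa>\<^sup>2)"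
      unfolding m_def z_def bb_def by simp
        have "p (X i) \<in> hadamard_subdiff \<phi> z"
    proof (rule subdiff_intro[where c = "1 / (2 * \<kappa>\<^sup>2)"])
      fix u
      have "\<phi> z + (norm bb)\<^sup>2 / (2 * \<kappa>\<^sup>2) \<le> \<phi> (z + u) + (norm (bb + u))\<^sup>2 / (2 * \<kappa>\<^sup>2)"
        using bmin[of "X i" "bb + u"] unfolding z_def bb_def by (simp add: algebra_simps)
      moreover have "(norm (bb + u))\<^sup>2 = (norm bb)\<^sup>2 + 2 * (bb \<bullet> u) + (norm u)\<^sup>2"
        by (simp add: power2_norm_eq_inner inner_add_left inner_add_right inner_commute)
      moreover have "p (X i) \<bullet> u = - (bb \<bullet> u) / \<kappa>\<^sup>2" unfolding pdef bb_def by simp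
      moreover have "((norm bb)\<^sup>2 + 2 * (bb \<bullet> u) + (norm u)\<^sup>2) / (2 * \<kappa>\<^sup>2)
          = (norm bb)\<^sup>2 / (2 * \<kappa>\<^sup>2) + (bb \<bullet> u) / \<kappa>\<^sup>2 + 1 / (2 * \<kappa>\<^sup>2) * (norm u)\<^sup>2"
        using k2 by (simp add: field_simps)
      ultimately show "\<phi> z + p (X i) \<bullet> u - 1 / (2 * \<kappa>\<^sup>2) * (norm u)\<^sup>2 \<le> \<phi> (z + u)"
        by simp
    qed
    then have "Hbar \<le> hamiltonian L z (- p (X i))" using visc unfolding viscosity_solution_def by blast
    from ham_ge[OF this vmax[of "X i", folded z_def]]
    have "Hbar \<le> (- p (X i)) \<bullet> VV - L z VV" unfolding VV_def .
    moreover have "(- p (X i)) \<bullet> VV = (bb \<bullet> VV) / \<kappa>\<^sup>2" unfolding pdef bb_def by simp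
    ultimately have s2: "- (bb \<bullet> VV) / \<kappa>\<^sup>2 \<le> - Hbar - L z VV" by simp
        have cbound: "c i s \<le> L z VV + \<epsilon>" if s: "s \<in> {t i..t (Suc i)}" for s
    proof -
      have "dist z (X i + (s - t i) *\<^sub>R VV) = norm (bb - (s - t i) *\<^sub>R VV)"
        unfolding z_def bb_def dist_norm by (simp add: algebra_simps)
      also have "\<dots> \<le> norm bb + \<bar>s - t i\<bar> * norm VV" by (rule order_trans[OF norm_triangle_ineq4]) simp
      also have "\<dots> \<le> \<beta> + \<rho> * M"
      proof -
        have "\<bar>s - t i\<bar> \<le> \<rho>" using s hhr unfolding hh_def by auto
        then have "\<bar>s - t i\<bar> * norm VV \<le> \<rho> * M" using VVM by (simp add: mult_mono')
        then show ?thesis using bbb by linarith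
      qed
      also have "\<dots> < \<delta>" using small unfolding \<rho>_def .
      finally show ?thesis unfolding c_def VV_def[symmetric] by (rule uc[OF VVM])
    qed
    have ci: "(c i has_integral integral {t i..t (Suc i)} (c i)) {t i..t (Suc i)}"
      unfolding has_integral_integral[symmetric] c_def
      by (intro integrable_continuous_interval L_comp continuous_intros)
    have ci2: "((\<lambda>s. L z VV + \<epsilon>) has_integral (hh * (L z VV + \<epsilon>))) {t i..t (Suc i)}"
      using has_integral_const_real[of "L z VV + \<epsilon>" "t i" "t (Suc i)"] hh0 unfolding hh_def by simp
    have s3: "integral {t i..t (Suc i)} (c i) \<le> hh * (L z VV + \<epsilon>)"
      by (rule has_integral_le[OF ci ci2 cbound])
    have s4: "hh\<^sup>2 * (norm VV)\<^sup>2 \<le> hh * (\<rho> * M\<^sup>2)"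
    proof -
      have "(norm VV)\<^sup>2 \<le> M\<^sup>2" using VVM by (simp add: power_mono)
      moreover have "hh\<^sup>2 = hh * hh" by (simp add: power2_eq_square)
      ultimately show ?thesis using hh0 hhr
        by (simp add: mult_mono' mult_left_mono)
    qed
    have "hh * (bb \<bullet> VV) / \<kappa>\<^sup>2 = hh * ((bb \<bullet> VV) / \<kappa>\<^sup>2)" by simp
    moreover have "hh * (- ((bb \<bullet> VV) / \<kappa>\<^sup>2)) \<le> hh * (- Hbar - L z VV)"
      using s2 hh0 by (intro mult_left_mono) auto
    ultimately have "- (hh * (bb \<bullet> VV) / \<kappa>\<^sup>2) \<le> hh * (- Hbar - L z VV)" by simp
    moreover have "hh\<^sup>2 * (norm VV)\<^sup>2 / (2 * \<kappa>\<^sup>2) \<le> hh * (\<rho> * M\<^sup>2 / (2 * \<kappa>\<^sup>2))"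
      using s4 k2 by (simp add: divide_right_mono)
    ultimately show ?thesis using s1 s3 unfolding C_def hh_def[symmetric]
      by (simp add: algebra_simps)
  qed
  have ind: "m (X k) + (\<Sum>i<k. integral {t i..t (Suc i)} (c i)) \<le> m (X 0) + (t k - t 0) * C" if "k \<le> n" for k
    using that
  proof (induction k)
    case 0 then show ?case by simp
  next
    case (Suc k)
    then have "m (X k) + (\<Sum>i<k. integral {t i..t (Suc i)} (c i)) \<le> m (X 0) + (t k - t 0) * C" by simp
    moreover have "m (X (Suc k)) + integral {t k..t (Suc k)} (c k) \<le> m (X k) + (t (Suc k) - t k) * C"
      using step Suc.prems by simp
    ultimately show ?case by (simp add: algebra_simps)
  qed
  have intg: "((\<lambda>s. L (feedback_x V y n t s) (feedback_v V y n t s)) has_integral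
      (\<Sum>i<n. integral {t i..t (Suc i)} (c i))) {t 0..t n}"
  proof (rule piecewise_integral(1))
    fix i assume i: "i < n"
    show "t i \<le> t (Suc i)" using part i unfolding is_partition_def by (simp add: less_imp_le)
    show "continuous_on {t i..t (Suc i)} (c i)" unfolding c_def
      by (intro L_comp continuous_intros)
    fix s assume s: "t i \<le> s" "s < t (Suc i)"
    show "L (feedback_x V y n t s) (feedback_v V y n t s) = c i s"
      unfolding c_def X_def feedback_piece[OF part i s] by simp
  qed
  have t0: "t 0 = 0" and tn: "t n = r" using part unfolding is_partition_def by auto
  have "feedback_cost L \<phi> V y r n t = \<phi> (X n) + (\<Sum>i<n. integral {t i..t (Suc i)} (c i))"
    unfolding feedback_cost_def feedback_end[OF part r] X_def using integral_unique[OF intg] t0 tn by simp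
  also have "\<phi> (X n) \<le> m (X n) + K * \<beta>"
  proof -
    have "\<phi> (X n) - \<phi> (X n + b (X n)) \<le> K * norm (b (X n))" using lip[of "X n" "X n + b (X n)"] by simp
    also have "\<dots> \<le> K * \<beta>" using nb K by (simp add: mult_left_mono)
    moreover have "0 \<le> (norm (b (X n)))\<^sup>2 / (2 * \<kappa>\<^sup>2)" using k2 by simp
    ultimately show ?thesis unfolding m_def by linarith
  qed
  finally have "feedback_cost L \<phi> V y r n t \<le> m (X n) + (\<Sum>i<n. integral {t i..t (Suc i)} (c i)) + K * \<beta>" by simp
  also have "\<dots> \<le> m (X 0) + r * C + K * \<beta>" using ind[of n] t0 tn by simp
  also have "m (X 0) \<le> \<phi> y" using bmin[of y 0] unfolding m_def X_def by simp
  finally show ?thesis unfolding C_def \<rho>_def by (simp add: algebra_simps)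
qed

lemma b_bound:
  assumes k: "\<kappa> > 0" and lip: "\<And>x y. \<phi> x - \<phi> y \<le> K * norm (x - y)" and K0: "0 \<le> K"
    and bmin: "\<phi> (x + b) + (norm b)\<^sup>2 / (2 * \<kappa>\<^sup>2) \<le> \<phi> x + (norm 0)\<^sup>2 / (2 * \<kappa>\<^sup>2)"
  shows "norm b \<le> 2 * \<kappa>\<^sup>2 * K"
proof (cases "b = 0")
  case True
  then show ?thesis using True K0 by simp
next
  case False
  have k2: "\<kappa>\<^sup>2 > 0" using k by simp
  have "(norm b)\<^sup>2 / (2 * \<kappa>\<^sup>2) \<le> \<phi> x - \<phi> (x + b)" using bmin by simp
  also have "\<dots> \<le> K * norm b" using lip[of x "x + b"] by simp
  finally have "(norm b)\<^sup>2 \<le> 2 * \<kappa>\<^sup>2 * K * norm b" using k2 by (simp add: field_simps)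
  then have "norm b * norm b \<le> (2 * \<kappa>\<^sup>2 * K) * norm b" by (simp add: power2_eq_square)
  then show ?thesis using False by simp
qed

lemma P2_main:
  assumes e: "\<epsilon> > 0"
  shows "\<exists>\<kappa>0>0. \<forall>\<kappa>\<in>{0<..\<kappa>0}. \<forall>b V :: real^'d \<Rightarrow> real^'d.
    (\<forall>x w. \<phi> (x + b x) + (norm (b x))\<^sup>2 / (2 * \<kappa>\<^sup>2) \<le> \<phi> (x + w) + (norm w)\<^sup>2 / (2 * \<kappa>\<^sup>2)) \<and>
    (\<forall>x w. (- ((1 / \<kappa>\<^sup>2) *\<^sub>R (- b x))) \<bullet> w - L (x + b x) w
        \<le> (- ((1 / \<kappa>\<^sup>2) *\<^sub>R (- b x))) \<bullet> V x - L (x + b x) (V x))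
    \<longrightarrow> (\<forall>r>0. \<forall>y. \<exists>\<rho>>0. \<forall>n t. is_partition r n t \<and> fineness n t < \<rho> \<longrightarrow>
          feedback_cost L \<phi> V y r n t \<le> \<phi> y - Hbar * r + (r + 1) * \<epsilon>)"
proof -
  obtain K where K: "K > 0" and lip: "\<And>x y. \<phi> x - \<phi> y \<le> K * norm (x - y)"
    using phi_lip by blast
  obtain M where M: "\<And>x p V. norm p \<le> 2 * K \<Longrightarrow> (\<forall>w. p \<bullet> w - L x w \<le> p \<bullet> V - L x V) \<Longrightarrow> norm V \<le> M"
    using argmax_bound[of "2 * K"] by blast
  obtain \<delta> where d: "\<delta> > 0" and uc0: "\<And>x x' v. norm v \<le> M \<Longrightarrow> dist x x' < \<delta> \<Longrightarrow> \<bar>L x v - L x' v\<bar> < \<epsilon> / 2"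
    using L_uc[of "\<epsilon> / 2" M] e by auto
  have uc: "L x' v \<le> L x v + \<epsilon> / 2" if "norm v \<le> M" "dist x x' < \<delta>" for x x' v
  proof -
    have "\<bar>L x v - L x' v\<bar> < \<epsilon> / 2" using uc0 that by blast
    then show ?thesis unfolding abs_less_iff by linarith
  qed
  define \<kappa>0 where "\<kappa>0 = min 1 (min (\<delta> / (4 * K)) (\<epsilon> / (4 * K\<^sup>2)))"
  have k0: "\<kappa>0 > 0" unfolding \<kappa>0_def using d e K by simp
  show ?thesis
  proof (rule exI[of _ \<kappa>0], intro conjI k0 ballI allI impI)
    fix \<kappa> r :: real and b V :: "real^'d \<Rightarrow> real^'d" and y :: "real^'d"
    assume k: "\<kappa> \<in> {0<..\<kappa>0}"
      and hyp: "(\<forall>x w. \<phi> (x + b x) + (norm (b x))\<^sup>2 / (2 * \<kappa>\<^sup>2) \<le> \<phi> (x + w) + (norm w)\<^sup>2 / (2 * \<kappa>\<^sup>2)) \<and>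
    (\<forall>x w. (- ((1 / \<kappa>\<^sup>2) *\<^sub>R (- b x))) \<bullet> w - L (x + b x) w
        \<le> (- ((1 / \<kappa>\<^sup>2) *\<^sub>R (- b x))) \<bullet> V x - L (x + b x) (V x))"
      and r: "r > 0"
    have kpos: "\<kappa> > 0" and kle: "\<kappa> \<le> \<kappa>0" using k by auto
    have k2: "\<kappa>\<^sup>2 > 0" using kpos by simp
    have k1: "\<kappa> \<le> 1" using kle unfolding \<kappa>0_def by simp
    have kk: "\<kappa>\<^sup>2 \<le> \<kappa>" using k1 kpos by (simp add: power2_eq_square mult_left_le)
    define \<beta> where "\<beta> = 2 * \<kappa>\<^sup>2 * K"
    have bmin: "\<And>x w. \<phi> (x + b x) + (norm (b x))\<^sup>2 / (2 * \<kappa>\<^sup>2) \<le> \<phi> (x + w) + (norm w)\<^sup>2 / (2 * \<kappa>\<^sup>2)"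
      using hyp by blast
    have nb: "norm (b x) \<le> \<beta>" for x
      unfolding \<beta>_def by (rule b_bound[OF kpos lip less_imp_le[OF K]]) (use bmin[of x 0] in simp)
    have vmax: "\<And>x w. (- ((1 / \<kappa>\<^sup>2) *\<^sub>R (- b x))) \<bullet> w - L (x + b x) w
        \<le> (- ((1 / \<kappa>\<^sup>2) *\<^sub>R (- b x))) \<bullet> V x - L (x + b x) (V x)"
      using hyp by blast
    have nV: "norm (V x) \<le> M" for x
    proof (rule M[OF _ allI[OF vmax[of x]]])
      have "norm (- ((1 / \<kappa>\<^sup>2) *\<^sub>R (- b x))) = norm (b x) / \<kappa>\<^sup>2" using k2 by simp
      also have "\<dots> \<le> \<beta> / \<kappa>\<^sup>2" using nb[of x] k2 by (simp add: divide_right_mono)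
      also have "\<dots> = 2 * K" unfolding \<beta>_def using k2 by simp
      finally show "norm (- ((1 / \<kappa>\<^sup>2) *\<^sub>R (- b x))) \<le> 2 * K" .
    qed
    have M0: "0 \<le> M" using nV[of 0] norm_ge_zero order_trans by blast
    define \<rho> where "\<rho> = min (\<delta> / (2 * (M + 1))) (\<epsilon> * \<kappa>\<^sup>2 / (r * (M\<^sup>2 + 1)))"
    have "0 < r * (M\<^sup>2 + 1)" using r by (simp add: add_nonneg_pos)
    then have "0 < \<epsilon> * \<kappa>\<^sup>2 / (r * (M\<^sup>2 + 1))" using e k2 by simp
    then have rho: "\<rho> > 0" unfolding \<rho>_def using d M0 by simp
    show "\<exists>\<rho>>0. \<forall>n t. is_partition r n t \<and> fineness n t < \<rho> \<longrightarrow>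
          feedback_cost L \<phi> V y r n t \<le> \<phi> y - Hbar * r + (r + 1) * \<epsilon>"
    proof (intro exI[of _ \<rho>] conjI rho allI impI, elim conjE)
      fix n t assume part: "is_partition r n t" and fin: "fineness n t < \<rho>"
      define f where "f = fineness n t"
      have f0: "0 \<le> f"
      proof -
        have n: "0 < n" using part_pos[OF part r] .
        have "0 < t (Suc 0) - t 0" using part n unfolding is_partition_def by auto
        also have "\<dots> \<le> f" unfolding f_def by (rule fineness_ge[OF n])
        finally show ?thesis by simp
      qed
      have b1: "\<beta> \<le> \<delta> / 2"
      proof -
        have "\<beta> \<le> 2 * \<kappa> * K" unfolding \<beta>_def using mult_right_mono[OF kk, of K] K by simp
        also have "\<dots> \<le> \<delta> / 2"
        proof -
          have "\<kappa> \<le> \<delta> / (4 * K)" using kle unfolding \<kappa>0_def by simp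
          then have "\<kappa> * (4 * K) \<le> \<delta>" using K by (simp add: pos_le_divide_eq)
          then show ?thesis by simp
        qed
        finally show ?thesis .
      qed
      have b2: "f * M < \<delta> / 2"
      proof -
        have "f * M \<le> \<rho> * M" using fin M0 unfolding f_def by (simp add: mult_right_mono)
        also have "\<dots> < \<rho> * (M + 1)" using rho by simp
        also have "\<dots> \<le> \<delta> / (2 * (M + 1)) * (M + 1)" unfolding \<rho>_def using M0
          by (intro mult_right_mono) auto
        also have "\<dots> = \<delta> / 2" using M0 by (simp add: field_simps)
        finally show ?thesis .
      qed
      have small: "\<beta> + fineness n t * M < \<delta>" using b1 b2 unfolding f_def by simp
      have "feedback_cost L \<phi> V y r n t
         \<le> \<phi> y - Hbar * r + r * (\<epsilon> / 2) + K * \<beta> + r * fineness n t * M\<^sup>2 / (2 * \<kappa>\<^sup>2)"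
        by (rule P2_core[OF kpos bmin vmax _ nb nV lip _ uc part r small]) (use K in auto)
      moreover have "K * \<beta> \<le> \<epsilon> / 2"
      proof -
        have "K * \<beta> = 2 * \<kappa>\<^sup>2 * K\<^sup>2" unfolding \<beta>_def by (simp add: power2_eq_square)
        also have "\<dots> \<le> 2 * \<kappa> * K\<^sup>2" using mult_right_mono[OF kk, of "K\<^sup>2"] by simp
        also have "\<dots> \<le> \<epsilon> / 2"
        proof -
          have "\<kappa> \<le> \<epsilon> / (4 * K\<^sup>2)" using kle unfolding \<kappa>0_def by simp
          then have "\<kappa> * (4 * K\<^sup>2) \<le> \<epsilon>" using K by (simp add: pos_le_divide_eq)
          then show ?thesis by simp
        qed
        finally show ?thesis .
      qed
      moreover have "r * fineness n t * M\<^sup>2 / (2 * \<kappa>\<^sup>2) \<le> \<epsilon> / 2"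
      proof -
        have rM: "0 < r * (M\<^sup>2 + 1)" using r by (simp add: add_nonneg_pos)
        have "f \<le> \<epsilon> * \<kappa>\<^sup>2 / (r * (M\<^sup>2 + 1))" using fin unfolding \<rho>_def f_def by simp
        then have "f * (r * (M\<^sup>2 + 1)) \<le> \<epsilon> * \<kappa>\<^sup>2" using rM by (simp add: pos_le_divide_eq)
        moreover have "r * f * M\<^sup>2 \<le> f * (r * (M\<^sup>2 + 1))" using r f0 by (simp add: algebra_simps)
        ultimately have "r * f * M\<^sup>2 \<le> \<epsilon> * \<kappa>\<^sup>2" by linarith
        then have "r * f * M\<^sup>2 / (2 * \<kappa>\<^sup>2) \<le> \<epsilon> * \<kappa>\<^sup>2 / (2 * \<kappa>\<^sup>2)"
          using k2 by (intro divide_right_mono) auto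
        also have "\<dots> = \<epsilon> / 2" using k2 by simp
        finally show ?thesis unfolding f_def .
      qed
      ultimately have X: "feedback_cost L \<phi> V y r n t \<le> \<phi> y - Hbar * r + r * (\<epsilon> / 2) + \<epsilon> / 2 + \<epsilon> / 2" by linarith
      have "r * (\<epsilon> / 2) \<le> r * \<epsilon>" using r e by simp
      moreover have "(r + 1) * \<epsilon> = r * \<epsilon> + \<epsilon>" by (simp add: algebra_simps)
      ultimately show "feedback_cost L \<phi> V y r n t \<le> \<phi> y - Hbar * r + (r + 1) * \<epsilon>"
        using X by linarith
    qed
  qed
qed

end


lemma integral_const_ivl: "a \<le> b \<Longrightarrow> integral {a..b} (\<lambda>x::real. c) = (b - a) *\<^sub>R c"
  using integral_unique[OF has_integral_const_real[of c a b]] by simp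

lemma knots_sum: "knots F y t i = y + (\<Sum>j<i. (t (Suc j) - t j) *\<^sub>R F (knots F y t j))"
  by (induction i) auto

lemma feedback_traj:
  fixes V :: "real^'d \<Rightarrow> real^'d"
  assumes part: "is_partition r n t" and r: "0 < r" and s: "0 \<le> s" "s \<le> r"
  shows "(feedback_v V y n t has_integral (feedback_x V y n t s - y)) {0..s}"
proof -
  define i where "i = seg_index n t s"
  define X where "X = knots V y t"
  have cov: "i < n" "t i \<le> s" "s \<le> t (Suc i)" using seg_index_cover[OF part r s] unfolding i_def by auto
  have t0: "t 0 = 0" using part unfolding is_partition_def by simp
  have mono: "t j \<le> t (Suc j)" if "j < i" for j
    using part that cov(1) unfolding is_partition_def by (simp add: less_imp_le)
  have A: "(feedback_v V y n t has_integral (\<Sum>j<i. integral {t j..t (Suc j)} (\<lambda>s. V (X j)))) {t 0..t i}"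
  proof (rule piecewise_integral(1))
    fix j assume j: "j < i"
    show "t j \<le> t (Suc j)" by (rule mono[OF j])
    show "continuous_on {t j..t (Suc j)} (\<lambda>s. V (X j))" by simp
    fix s' assume "t j \<le> s'" "s' < t (Suc j)"
    then show "feedback_v V y n t s' = V (X j)" unfolding X_def
      using feedback_piece(2)[OF part _ \<open>t j \<le> s'\<close> \<open>s' < t (Suc j)\<close>] j cov(1) by simp
  qed
  have "(\<Sum>j<i. integral {t j..t (Suc j)} (\<lambda>s. V (X j))) = X i - y"
    unfolding X_def knots_sum[of V y t i] using mono by (simp add: integral_const_ivl)
  with A have A': "(feedback_v V y n t has_integral (X i - y)) {t 0..t i}" by simp
  have B: "(feedback_v V y n t has_integral ((s - t i) *\<^sub>R V (X i))) {t i..s}"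
  proof (rule has_integral_spike_finite[of "{s}"])
    show "((\<lambda>s. V (X i)) has_integral (s - t i) *\<^sub>R V (X i)) {t i..s}"
      using has_integral_const_real[of "V (X i)" "t i" s] cov by simp
    fix x assume "x \<in> {t i..s} - {s}"
    then have x: "t i \<le> x" "x < t (Suc i)" using cov by auto
    show "feedback_v V y n t x = V (X i)" unfolding X_def feedback_piece(2)[OF part cov(1) x] ..
  qed simp
  have "(feedback_v V y n t has_integral (X i - y + (s - t i) *\<^sub>R V (X i))) {t 0..s}"
    by (rule has_integral_combine[OF _ cov(2) A' B]) (use part cov(1) in \<open>auto intro: part_mono\<close>)
  moreover have "X i - y + (s - t i) *\<^sub>R V (X i) = feedback_x V y n t s - y"
    unfolding feedback_x_def X_def i_def by simp
  ultimately show ?thesis using t0 by metis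
qed

context setting begin

lemma feedback_control:
  fixes V :: "real^'d \<Rightarrow> real^'d" and y :: "real^'d"
  assumes part: "is_partition r n t" and r: "0 < r"
  defines "v \<equiv> feedback_v V y n t"
  shows "v absolutely_integrable_on {0..r}"
    and "(\<lambda>s. L (y + integral {0..s} v) (v s)) absolutely_integrable_on {0..r}"
    and "\<phi> (y + integral {0..r} v) + integral {0..r} (\<lambda>s. L (y + integral {0..s} v) (v s))
         = feedback_cost L \<phi> V y r n t"
proof -
  have t0: "t 0 = 0" and tn: "t n = r" using part unfolding is_partition_def by auto
  have mono: "\<And>i. i < n \<Longrightarrow> t i \<le> t (Suc i)" using part unfolding is_partition_def by (simp add: less_imp_le)
  show "v absolutely_integrable_on {0..r}"
    using piecewise_integral(2)[of n t "\<lambda>i s. V (knots V y t i)" v, OF mono] feedback_piece(2)[OF part]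
    unfolding v_def t0 tn by auto
  have traj: "y + integral {0..s} v = feedback_x V y n t s" if "s \<in> {0..r}" for s
    using integral_unique[OF feedback_traj[OF part r, of s V y]] that unfolding v_def by simp
  have g: "(\<lambda>s. L (feedback_x V y n t s) (feedback_v V y n t s)) absolutely_integrable_on {0..r}"
  proof -
    have "(\<lambda>s. L (feedback_x V y n t s) (feedback_v V y n t s)) absolutely_integrable_on {t 0..t n}"
    proof (rule piecewise_integral(2)[where c = "\<lambda>i s. L (knots V y t i + (s - t i) *\<^sub>R V (knots V y t i)) (V (knots V y t i))"])
      fix i assume i: "i < n"
      show "t i \<le> t (Suc i)" by (rule mono[OF i])
      show "continuous_on {t i..t (Suc i)} (\<lambda>s. L (knots V y t i + (s - t i) *\<^sub>R V (knots V y t i)) (V (knots V y t i)))"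
        by (intro L_comp continuous_intros)
      fix s assume s: "t i \<le> s" "s < t (Suc i)"
      show "L (feedback_x V y n t s) (feedback_v V y n t s) = L (knots V y t i + (s - t i) *\<^sub>R V (knots V y t i)) (V (knots V y t i))"
        unfolding feedback_piece[OF part i s] ..
    qed
    then show ?thesis unfolding t0 tn .
  qed
  have eq: "\<And>s. s \<in> {0..r} \<Longrightarrow> L (y + integral {0..s} v) (v s) = L (feedback_x V y n t s) (feedback_v V y n t s)"
    using traj unfolding v_def by simp
  show "(\<lambda>s. L (y + integral {0..s} v) (v s)) absolutely_integrable_on {0..r}"
    using g unfolding absolutely_integrable_on_def
    using Henstock_Kurzweil_Integration.integrable_cong[of "{0..r}", OF eq]
      Henstock_Kurzweil_Integration.integrable_cong[of "{0..r}" "\<lambda>s. norm (L (y + integral {0..s} v) (v s))"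
        "\<lambda>s. norm (L (feedback_x V y n t s) (feedback_v V y n t s))"] eq
    by simp
  show "\<phi> (y + integral {0..r} v) + integral {0..r} (\<lambda>s. L (y + integral {0..s} v) (v s))
         = feedback_cost L \<phi> V y r n t"
  proof -
    have "integral {0..r} (\<lambda>s. L (y + integral {0..s} v) (v s)) =
      integral {0..r} (\<lambda>s. L (feedback_x V y n t s) (feedback_v V y n t s))"
      by (rule Henstock_Kurzweil_Integration.integral_cong[OF eq])
    then show ?thesis unfolding feedback_cost_def using traj[of r] r by simp
  qed
qed

end


lemma inner_const_has_integral:
  fixes v :: "real \<Rightarrow> real^'d"
  assumes "(v has_integral I) {a..b}" "a \<le> b"
  shows "((\<lambda>s. - (q \<bullet> v s) - c) has_integral (- (q \<bullet> I) - (b - a) * c)) {a..b}"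
proof -
  have "((\<lambda>x. q \<bullet> x) \<circ> v has_integral q \<bullet> I) {a..b}"
    by (rule has_integral_linear[OF assms(1) bounded_linear_inner_right])
  then have "((\<lambda>s. q \<bullet> v s) has_integral q \<bullet> I) {a..b}" by (simp add: o_def)
  from has_integral_neg[OF this] have "((\<lambda>s. - (q \<bullet> v s)) has_integral - (q \<bullet> I)) {a..b}" by simp
  from has_integral_diff[OF this has_integral_const_real[of c a b]] show ?thesis using assms(2) by simp
qed

context setting begin

lemma ham_stab:
  assumes e: "\<epsilon> > 0"
  shows "\<exists>\<delta>>0. \<forall>z x q. norm q \<le> R \<longrightarrow> dist x z < \<delta> \<longrightarrow> (\<forall>w. q \<bullet> w - L z w \<le> Hbar)
     \<longrightarrow> (\<forall>w. q \<bullet> w - L x w \<le> Hbar + \<epsilon>)"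
proof -
  obtain C where C: "\<And>x w. (R + 1) * norm w - C \<le> L x w" using superlin by blast
  define M where "M = max 0 (C - Hbar)"
  obtain \<delta> where d: "\<delta> > 0" and uc: "\<And>x x' v. norm v \<le> M \<Longrightarrow> dist x x' < \<delta> \<Longrightarrow> \<bar>L x v - L x' v\<bar> < \<epsilon>"
    using L_uc[OF e, of M] by blast
  show ?thesis
  proof (intro exI[of _ \<delta>] conjI d allI impI)
    fix z x q w :: "real^'d"
    assume q: "norm q \<le> R" and xz: "dist x z < \<delta>" and H: "\<forall>w. q \<bullet> w - L z w \<le> Hbar"
    show "q \<bullet> w - L x w \<le> Hbar + \<epsilon>"
    proof (cases "norm w \<le> M")
      case True
      have "\<bar>L z w - L x w\<bar> < \<epsilon>" using uc[OF True] xz by (simp add: dist_commute)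
      then show ?thesis using H[rule_format, of w] unfolding abs_less_iff by linarith
    next
      case False
      have "q \<bullet> w \<le> R * norm w"
        using norm_cauchy_schwarz[of q w] mult_right_mono[OF q norm_ge_zero[of w]] by linarith
      moreover note C[of w x]
      ultimately have "q \<bullet> w - L x w \<le> C - norm w" by (simp add: algebra_simps)
      also have "\<dots> \<le> Hbar" using False unfolding M_def by simp
      finally show ?thesis using e by simp
    qed
  qed
qed

lemma supconv_exists:
  assumes k: "\<kappa> > 0"
  shows "\<exists>b. \<forall>w. \<phi> (z + w) - (norm w)\<^sup>2 / (2 * \<kappa>\<^sup>2) \<le> \<phi> (z + b) - (norm b)\<^sup>2 / (2 * \<kappa>\<^sup>2)"
proof -
  obtain B where B: "\<And>x. \<bar>\<phi> x\<bar> \<le> B" using phi_bounded by blast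
  have "continuous_on UNIV (\<lambda>x. - \<phi> x)" by (intro continuous_intros phi_cont)
  from infconv_exists[OF this _ k, of B z] B
  obtain b where "\<And>w. - \<phi> (z + b) + (norm b)\<^sup>2 / (2 * \<kappa>\<^sup>2) \<le> - \<phi> (z + w) + (norm w)\<^sup>2 / (2 * \<kappa>\<^sup>2)"
    by auto
  then show ?thesis by (intro exI[of _ b]) (smt (verit))
qed

lemma P1_ge:
  fixes v :: "real \<Rightarrow> real^'d" and y :: "real^'d"
  assumes r: "r > 0" and vi: "v absolutely_integrable_on {0..r}"
    and Li: "(\<lambda>s. L (y + integral {0..s} v) (v s)) absolutely_integrable_on {0..r}"
  shows "\<phi> y - r * Hbar \<le> \<phi> (y + integral {0..r} v) + integral {0..r} (\<lambda>s. L (y + integral {0..s} v) (v s))"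
proof (rule field_le_epsilon)
  fix e :: real assume e: "e > 0"
  define \<epsilon> where "\<epsilon> = e / (r + 2)"
  have eps: "\<epsilon> > 0" unfolding \<epsilon>_def using e r by simp
  define X where "X s = y + integral {0..s} v" for s
  define Lg where "Lg s = L (X s) (v s)" for s
  have vint: "v integrable_on {0..r}" and nvint: "(\<lambda>s. norm (v s)) integrable_on {0..r}"
    using vi unfolding absolutely_integrable_on_def by auto
  have Lgint: "Lg integrable_on {0..r}" using Li unfolding absolutely_integrable_on_def Lg_def X_def by auto
  define A where "A = integral {0..r} (\<lambda>s. norm (v s))"
  have A0: "0 \<le> A" unfolding A_def by (rule integral_nonneg[OF nvint]) simp
  obtain K where K: "K > 0" and lip: "\<And>x y. \<phi> x - \<phi> y \<le> K * norm (x - y)"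
    using phi_lip by blast
  obtain \<delta> where d: "\<delta> > 0" and stab: "\<And>z x q. norm q \<le> 2 * K \<Longrightarrow> dist x z < \<delta> \<Longrightarrow> (\<forall>w. q \<bullet> w - L z w \<le> Hbar)
     \<Longrightarrow> (\<forall>w. q \<bullet> w - L x w \<le> Hbar + \<epsilon>)"
    using ham_stab[OF eps, of "2 * K"] by blast
  define \<kappa> where "\<kappa> = min 1 (min (\<delta> / (8 * K)) (\<epsilon> / (2 * K\<^sup>2)))"
  have kpos: "\<kappa> > 0" unfolding \<kappa>_def using d eps K by simp
  have k2: "\<kappa>\<^sup>2 > 0" using kpos by simp
  have k1: "\<kappa> \<le> 1" unfolding \<kappa>_def by simp
  have kk: "\<kappa>\<^sup>2 \<le> \<kappa>" using k1 kpos by (simp add: power2_eq_square mult_left_le)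
  define \<beta> where "\<beta> = 2 * \<kappa>\<^sup>2 * K"
  have b1: "\<beta> \<le> \<delta> / 4"
  proof -
    have "\<beta> \<le> 2 * \<kappa> * K" unfolding \<beta>_def using mult_right_mono[OF kk, of K] K by simp
    also have "\<dots> \<le> \<delta> / 4"
    proof -
      have "\<kappa> \<le> \<delta> / (8 * K)" unfolding \<kappa>_def by simp
      then have "\<kappa> * (8 * K) \<le> \<delta>" using K by (simp add: pos_le_divide_eq)
      then show ?thesis by simp
    qed
    finally show ?thesis .
  qed
  have b2: "K * \<beta> \<le> \<epsilon>"
  proof -
    have "K * \<beta> = 2 * \<kappa>\<^sup>2 * K\<^sup>2" unfolding \<beta>_def by (simp add: power2_eq_square)
    also have "\<dots> \<le> 2 * \<kappa> * K\<^sup>2" using mult_right_mono[OF kk, of "K\<^sup>2"] by simp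
    also have "\<dots> \<le> \<epsilon>"
    proof -
      have "\<kappa> \<le> \<epsilon> / (2 * K\<^sup>2)" unfolding \<kappa>_def by simp
      then have "\<kappa> * (2 * K\<^sup>2) \<le> \<epsilon>" using K by (simp add: pos_le_divide_eq)
      then show ?thesis by simp
    qed
    finally show ?thesis .
  qed
  define \<eta> where "\<eta> = min (\<delta> / 2) (\<epsilon> * (2 * \<kappa>\<^sup>2) / (A + 1))"
  have eta: "\<eta> > 0" unfolding \<eta>_def using d eps k2 A0 by simp
  have etaA: "\<eta> * A / (2 * \<kappa>\<^sup>2) \<le> \<epsilon>"
  proof -
    have "\<eta> \<le> \<epsilon> * (2 * \<kappa>\<^sup>2) / (A + 1)" unfolding \<eta>_def by (rule min.cobounded2)
    then have "\<eta> * (A + 1) \<le> \<epsilon> * (2 * \<kappa>\<^sup>2)" using A0 by (simp add: pos_le_divide_eq)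
    moreover have "\<eta> * A \<le> \<eta> * (A + 1)" using eta by simp
    ultimately have "\<eta> * A \<le> \<epsilon> * (2 * \<kappa>\<^sup>2)" by linarith
    then show ?thesis using k2 by (simp add: pos_divide_le_eq)
  qed
    have Xc: "continuous_on {0..r} X" unfolding X_def
    by (intro continuous_intros indefinite_integral_continuous_1 vint)
  then have "uniformly_continuous_on {0..r} X" by (rule compact_uniformly_continuous) simp
  then obtain dd where dd: "dd > 0" and Xuc: "\<And>s s'. s \<in> {0..r} \<Longrightarrow> s' \<in> {0..r} \<Longrightarrow> dist s' s < dd \<Longrightarrow> dist (X s') (X s) < \<eta>"
    unfolding uniformly_continuous_on_def using eta by metis
  define N :: nat where "N = nat (ceiling (r / dd)) + 1"
  have N: "N > 0" unfolding N_def by simp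
  have hN: "r / N < dd"
  proof -
    have "r / dd < N" unfolding N_def by linarith
    then have "r < N * dd" using dd by (simp add: divide_less_eq)
    then show ?thesis using N by (simp add: divide_less_eq mult.commute)
  qed
  define t where "t i = r * i / N" for i :: nat
  define h where "h = r / N"
  have th: "t (Suc i) - t i = h" for i unfolding t_def h_def by (simp add: algebra_simps add_divide_distrib)
  have h0: "h > 0" unfolding h_def using r N by simp
  have t0: "t 0 = 0" and tN: "t N = r" unfolding t_def using N by auto
  have tmono: "t i \<le> t (Suc i)" for i using th[of i] h0 by simp
  have trange: "0 \<le> t i \<and> (i \<le> N \<longrightarrow> t i \<le> r)" for i unfolding t_def using r N
    by (auto simp: field_simps)
    obtain bs where bs: "\<And>z w. \<phi> (z + w) - (norm w)\<^sup>2 / (2 * \<kappa>\<^sup>2) \<le> \<phi> (z + bs z) - (norm (bs z))\<^sup>2 / (2 * \<kappa>\<^sup>2)"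
    using supconv_exists[OF kpos] by metis
  define S where "S z = \<phi> (z + bs z) - (norm (bs z))\<^sup>2 / (2 * \<kappa>\<^sup>2)" for z
  have nbs: "norm (bs z) \<le> \<beta>" for z
  proof (cases "bs z = 0")
    case True then show ?thesis unfolding \<beta>_def using K k2 by simp
  next
    case False
    have "(norm (bs z))\<^sup>2 / (2 * \<kappa>\<^sup>2) \<le> \<phi> (z + bs z) - \<phi> z" using bs[of z 0] by simp
    also have "\<dots> \<le> K * norm (bs z)" using lip[of "z + bs z" z] by simp
    finally have "(norm (bs z))\<^sup>2 \<le> 2 * \<kappa>\<^sup>2 * K * norm (bs z)" using k2 by (simp add: field_simps)
    then have "norm (bs z) * norm (bs z) \<le> (2 * \<kappa>\<^sup>2 * K) * norm (bs z)" by (simp add: power2_eq_square)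
    then show ?thesis unfolding \<beta>_def using False by simp
  qed
    have vsub: "(v has_integral integral {t i..t (Suc i)} v) {t i..t (Suc i)}" if "i < N" for i
    using integrable_subinterval_real[OF vint, of "t i" "t (Suc i)"] trange[of i] trange[of "Suc i"] that
    by (simp add: has_integral_integral)
  have nvsub: "((\<lambda>s. norm (v s)) has_integral integral {t i..t (Suc i)} (\<lambda>s. norm (v s))) {t i..t (Suc i)}" if "i < N" for i
    using integrable_subinterval_real[OF nvint, of "t i" "t (Suc i)"] trange[of i] trange[of "Suc i"] that
    by (simp add: has_integral_integral)
  have Lgsub: "(Lg has_integral integral {t i..t (Suc i)} Lg) {t i..t (Suc i)}" if "i < N" for i
    using integrable_subinterval_real[OF Lgint, of "t i" "t (Suc i)"] trange[of i] trange[of "Suc i"] that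
    by (simp add: has_integral_integral)
  have Xdiff: "X (t (Suc i)) - X (t i) = integral {t i..t (Suc i)} v" if "i < N" for i
  proof -
    have "integral {0..t i} v + integral {t i..t (Suc i)} v = integral {0..t (Suc i)} v"
      by (rule Henstock_Kurzweil_Integration.integral_combine) (use trange[of i] trange[of "Suc i"] tmono[of i] that
          integrable_subinterval_real[OF vint, of 0 "t (Suc i)"] in auto)
    then show ?thesis unfolding X_def by (simp add: algebra_simps)
  qed
  define C where "C = Hbar + \<epsilon>"
  have step: "S (X (t i)) - h * C - \<eta> / (2 * \<kappa>\<^sup>2) * integral {t i..t (Suc i)} (\<lambda>s. norm (v s))
      \<le> S (X (t (Suc i))) + integral {t i..t (Suc i)} Lg" if i: "i < N" for i
  proof -
    define z where "z = X (t i)"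
    define bb where "bb = bs z"
    define q where "q = (1 / \<kappa>\<^sup>2) *\<^sub>R bb"
    define \<Delta> where "\<Delta> = integral {t i..t (Suc i)} v"
    define a where "a = integral {t i..t (Suc i)} (\<lambda>s. norm (v s))"
    have Xs: "X (t (Suc i)) = z + \<Delta>" unfolding z_def \<Delta>_def using Xdiff[OF i] by (simp add: algebra_simps)
    have ti: "t i \<in> {0..r}" "t (Suc i) \<in> {0..r}" using trange[of i] trange[of "Suc i"] i by auto
        have "q \<in> hadamard_superdiff \<phi> (z + bb)"
    proof (rule superdiff_intro[where c = "1 / (2 * \<kappa>\<^sup>2)"])
      fix u
      have "\<phi> (z + (bb + u)) - (norm (bb + u))\<^sup>2 / (2 * \<kappa>\<^sup>2) \<le> \<phi> (z + bb) - (norm bb)\<^sup>2 / (2 * \<kappa>\<^sup>2)"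
        using bs[of z "bb + u"] unfolding bb_def .
      moreover have "(norm (bb + u))\<^sup>2 = (norm bb)\<^sup>2 + 2 * (bb \<bullet> u) + (norm u)\<^sup>2"
        by (simp add: power2_norm_eq_inner inner_add_left inner_add_right inner_commute)
      moreover have "((norm bb)\<^sup>2 + 2 * (bb \<bullet> u) + (norm u)\<^sup>2) / (2 * \<kappa>\<^sup>2)
          = (norm bb)\<^sup>2 / (2 * \<kappa>\<^sup>2) + q \<bullet> u + 1 / (2 * \<kappa>\<^sup>2) * (norm u)\<^sup>2"
        unfolding q_def using k2 by (simp add: field_simps)
      ultimately show "\<phi> (z + bb + u) \<le> \<phi> (z + bb) + q \<bullet> u + 1 / (2 * \<kappa>\<^sup>2) * (norm u)\<^sup>2"
        by (simp add: add.assoc)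
    qed
    then have "hamiltonian L (z + bb) (- q) \<le> Hbar" using visc unfolding viscosity_solution_def by blast
    then have H: "\<forall>w. (- q) \<bullet> w - L (z + bb) w \<le> Hbar" using ham_le by blast
    have nq: "norm (- q) \<le> 2 * K"
    proof -
      have "norm (- q) = norm bb / \<kappa>\<^sup>2" unfolding q_def using k2 by simp
      also have "\<dots> \<le> \<beta> / \<kappa>\<^sup>2" using nbs[of z] k2 unfolding bb_def by (simp add: divide_right_mono)
      also have "\<dots> = 2 * K" unfolding \<beta>_def using k2 by simp
      finally show ?thesis .
    qed
    have pt: "- (q \<bullet> v s) - C \<le> Lg s" if s: "s \<in> {t i..t (Suc i)}" for s
    proof -
      have s0: "s \<in> {0..r}" using s ti by auto
      have "dist s (t i) < dd" using s th[of i] hN unfolding h_def dist_real_def by auto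
      then have "dist (X s) z < \<eta>" unfolding z_def using Xuc[OF ti(1) s0] by simp
      then have "dist (X s) (z + bb) < \<delta>"
      proof -
        assume a1: "dist (X s) z < \<eta>"
        have "dist (X s) (z + bb) \<le> dist (X s) z + norm bb"
          by (metis dist_norm dist_triangle2 norm_minus_commute add_diff_cancel_left' diff_add_cancel
              dist_add_cancel dist_commute)
        also have "\<dots> < \<eta> + \<beta>" using a1 nbs[of z] unfolding bb_def by simp
        also have "\<dots> \<le> \<delta>"
        proof -
          have "\<eta> \<le> \<delta> / 2" unfolding \<eta>_def by (rule min.cobounded1)
          then show ?thesis using b1 d by linarith
        qed
        finally show ?thesis .
      qed
      from stab[OF nq this H] have "(- q) \<bullet> v s - L (X s) (v s) \<le> Hbar + \<epsilon>" by blast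
      then show ?thesis unfolding Lg_def C_def by simp
    qed
    have "- (q \<bullet> \<Delta>) - h * C \<le> integral {t i..t (Suc i)} Lg"
    proof -
      have "((\<lambda>s. - (q \<bullet> v s) - C) has_integral (- (q \<bullet> \<Delta>) - (t (Suc i) - t i) * C)) {t i..t (Suc i)}"
        unfolding \<Delta>_def by (rule inner_const_has_integral[OF vsub[OF i] tmono])
      from has_integral_le[OF this Lgsub[OF i] pt] show ?thesis using th[of i] by simp
    qed
    moreover have "S z + q \<bullet> \<Delta> - (norm \<Delta>)\<^sup>2 / (2 * \<kappa>\<^sup>2) \<le> S (X (t (Suc i)))"
    proof -
      have "\<phi> (X (t (Suc i)) + (bb - \<Delta>)) - (norm (bb - \<Delta>))\<^sup>2 / (2 * \<kappa>\<^sup>2) \<le> S (X (t (Suc i)))"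
        unfolding S_def by (rule bs)
      moreover have "X (t (Suc i)) + (bb - \<Delta>) = z + bb" unfolding Xs by simp
      moreover have "(norm (bb - \<Delta>))\<^sup>2 = (norm bb)\<^sup>2 - 2 * (bb \<bullet> \<Delta>) + (norm \<Delta>)\<^sup>2"
        using norm_diff_scale_sq[of bb 1 \<Delta>] by simp
      moreover have "((norm bb)\<^sup>2 - 2 * (bb \<bullet> \<Delta>) + (norm \<Delta>)\<^sup>2) / (2 * \<kappa>\<^sup>2)
          = (norm bb)\<^sup>2 / (2 * \<kappa>\<^sup>2) - q \<bullet> \<Delta> + (norm \<Delta>)\<^sup>2 / (2 * \<kappa>\<^sup>2)"
        unfolding q_def using k2 by (simp add: field_simps)
      ultimately show ?thesis unfolding S_def bb_def by simp
    qed
    moreover have "(norm \<Delta>)\<^sup>2 / (2 * \<kappa>\<^sup>2) \<le> \<eta> / (2 * \<kappa>\<^sup>2) * a"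
    proof -
      have n1: "norm \<Delta> \<le> a" unfolding \<Delta>_def a_def
        by (rule integral_norm_bound_integral) (use vsub[OF i] nvsub[OF i] in auto)
      have n2: "norm \<Delta> < \<eta>"
      proof -
        have "dist (t (Suc i)) (t i) < dd" using th[of i] hN h0 unfolding h_def dist_real_def by auto
        then have "dist (X (t (Suc i))) (X (t i)) < \<eta>" using Xuc[OF ti(1) ti(2)] by simp
        then show ?thesis unfolding dist_norm Xs z_def[symmetric] by simp
      qed
      have "(norm \<Delta>)\<^sup>2 = norm \<Delta> * norm \<Delta>" by (simp add: power2_eq_square)
      also have "\<dots> \<le> \<eta> * a" using n1 n2 eta by (intro mult_mono) auto
      finally have "(norm \<Delta>)\<^sup>2 \<le> \<eta> * a" .
      then have "(norm \<Delta>)\<^sup>2 / (2 * \<kappa>\<^sup>2) \<le> \<eta> * a / (2 * \<kappa>\<^sup>2)" using k2 by (intro divide_right_mono) auto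
      then show ?thesis by simp
    qed
    ultimately show ?thesis unfolding z_def[symmetric] a_def[symmetric] by linarith
  qed
  have ind: "S (X (t 0)) - t k * C - \<eta> / (2 * \<kappa>\<^sup>2) * (\<Sum>i<k. integral {t i..t (Suc i)} (\<lambda>s. norm (v s)))
      \<le> S (X (t k)) + (\<Sum>i<k. integral {t i..t (Suc i)} Lg)" if "k \<le> N" for k
    using that
  proof (induction k)
    case 0 then show ?case using t0 by simp
  next
    case (Suc k)
    then have IH: "S (X (t 0)) - t k * C - \<eta> / (2 * \<kappa>\<^sup>2) * (\<Sum>i<k. integral {t i..t (Suc i)} (\<lambda>s. norm (v s)))
      \<le> S (X (t k)) + (\<Sum>i<k. integral {t i..t (Suc i)} Lg)" by simp
    have st: "S (X (t k)) - h * C - \<eta> / (2 * \<kappa>\<^sup>2) * integral {t k..t (Suc k)} (\<lambda>s. norm (v s))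
      \<le> S (X (t (Suc k))) + integral {t k..t (Suc k)} Lg" using step Suc.prems by simp
    have "t (Suc k) = t k + h" using th[of k] by simp
    then show ?case using IH st by (simp add: algebra_simps)
  qed
  have sumL: "(\<Sum>i<N. integral {t i..t (Suc i)} Lg) = integral {0..r} Lg"
    using part_has_integral[of N t Lg, OF tmono Lgsub] t0 tN by (metis integral_unique)
  have sumA: "(\<Sum>i<N. integral {t i..t (Suc i)} (\<lambda>s. norm (v s))) = A"
    using part_has_integral[of N t "\<lambda>s. norm (v s)", OF tmono nvsub] t0 tN unfolding A_def
    by (metis integral_unique)
  from ind[of N] have main: "S (X 0) - r * C - \<eta> / (2 * \<kappa>\<^sup>2) * A \<le> S (X r) + integral {0..r} Lg"
    unfolding sumL sumA t0 tN by simp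
  have SX0: "\<phi> y \<le> S (X 0)" using bs[of "X 0" 0] unfolding S_def X_def by simp
  have SXr: "S (X r) \<le> \<phi> (X r) + \<epsilon>"
  proof -
    have "\<phi> (X r + bs (X r)) - \<phi> (X r) \<le> K * norm (bs (X r))" using lip[of "X r + bs (X r)" "X r"] by simp
    also have "\<dots> \<le> K * \<beta>" using nbs K by (simp add: mult_left_mono)
    finally have "\<phi> (X r + bs (X r)) \<le> \<phi> (X r) + \<epsilon>" using b2 by linarith
    moreover have "0 \<le> (norm (bs (X r)))\<^sup>2 / (2 * \<kappa>\<^sup>2)" using k2 by simp
    ultimately show ?thesis unfolding S_def by linarith
  qed
  have "\<eta> / (2 * \<kappa>\<^sup>2) * A \<le> \<epsilon>" using etaA by simp
  then have "\<phi> y - r * Hbar \<le> \<phi> (X r) + integral {0..r} Lg + (r + 2) * \<epsilon>"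
    using main SX0 SXr unfolding C_def by (simp add: algebra_simps)
  also have "(r + 2) * \<epsilon> = e" unfolding \<epsilon>_def using r by simp
  finally show "\<phi> y - r * Hbar \<le> \<phi> (y + integral {0..r} v) + integral {0..r} (\<lambda>s. L (y + integral {0..s} v) (v s)) + e"
    unfolding X_def Lg_def .
qed

end


lemma uniform_partition:
  fixes r :: real
  assumes r: "r > 0" and N: "N > 0"
  shows "is_partition r N (\<lambda>i. r * i / N)" and "fineness N (\<lambda>i. r * i / N) = r / N"
proof -
  have d: "r * real (Suc i) / N - r * i / N = r / N" for i
    by (simp add: algebra_simps add_divide_distrib)
  have rN: "r / N > 0" using r N by simp
  show "is_partition r N (\<lambda>i. r * i / N)" unfolding is_partition_def
  proof (intro conjI allI impI)
    fix i assume "i < N"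
    show "r * real i / real N < r * real (Suc i) / real N" using d[of i] rN by linarith
  qed (use N in auto)
  have "{r * real (Suc i) / N - r * i / N | i. i < N} = {r / N}" unfolding d using N by auto
  then show "fineness N (\<lambda>i. r * i / N) = r / N" unfolding fineness_def by simp
qed

theorem theorem3:
  fixes L :: "real^'d \<Rightarrow> real^'d \<Rightarrow> real"
    and \<phi> :: "real^'d \<Rightarrow> real"
    and Hbar :: real
  assumes L_cont: "continuous_on UNIV (\<lambda>(x, v). L x v)"
    and L_per: "\<And>v. periodic (\<lambda>x. L x v)"
    and L_superlin: "filterlim (\<lambda>v. (INF x. L x v) / norm v) at_top at_infinity"
    and visc: "viscosity_solution L \<phi> Hbar"
  shows "(\<forall>r>0. \<forall>y. lax_oleinik L r \<phi> y = ereal (\<phi> y - r * Hbar)) \<and>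
    (\<forall>b vv :: real \<Rightarrow> real^'d \<Rightarrow> real^'d.
       (\<forall>\<kappa>>0. periodic (b \<kappa>) \<and> periodic (vv \<kappa>) \<and>
          (\<forall>x. (\<forall>w. \<phi> (x + b \<kappa> x) + (norm (b \<kappa> x))\<^sup>2 / (2 * \<kappa>\<^sup>2) \<le> \<phi> (x + w) + (norm w)\<^sup>2 / (2 * \<kappa>\<^sup>2)) \<and>
               (let p = (1 / \<kappa>\<^sup>2) *\<^sub>R (- b \<kappa> x) in
                 \<forall>w. - p \<bullet> w - L (x + b \<kappa> x) w \<le> - p \<bullet> vv \<kappa> x - L (x + b \<kappa> x) (vv \<kappa> x))))
       \<longrightarrow> (\<forall>\<epsilon>>0. \<exists>\<kappa>0>0. \<forall>\<kappa>\<in>{0<..\<kappa>0}. \<forall>r>0. \<forall>y.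
              limsup_fine r (feedback_cost L \<phi> (vv \<kappa>) y r)
                \<le> ereal (\<phi> y - Hbar * r + (r + 1) * \<epsilon>)))"
proof -
  interpret S: setting L \<phi> Hbar
    using L_cont L_per L_superlin visc by unfold_locales auto
  have part1: "lax_oleinik L r \<phi> y = ereal (\<phi> y - r * Hbar)" if r: "r > 0" for r y
  proof -
    define SS where "SS = {ereal (\<phi> (y + integral {0..r} v)
        + integral {0..r} (\<lambda>t. L (y + integral {0..t} v) (v t))) | v.
        v absolutely_integrable_on {0..r} \<and>
        (\<lambda>t. L (y + integral {0..t} v) (v t)) absolutely_integrable_on {0..r}}"
    have lo: "lax_oleinik L r \<phi> y = Inf SS" unfolding lax_oleinik_def SS_def ..
    have ge: "ereal (\<phi> y - r * Hbar) \<le> Inf SS"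
    proof (rule Inf_greatest)
      fix x assume "x \<in> SS"
      then obtain v where x: "x = ereal (\<phi> (y + integral {0..r} v)
        + integral {0..r} (\<lambda>t. L (y + integral {0..t} v) (v t)))"
        and vi: "v absolutely_integrable_on {0..r}"
        and Li: "(\<lambda>t. L (y + integral {0..t} v) (v t)) absolutely_integrable_on {0..r}"
        unfolding SS_def by blast
      show "ereal (\<phi> y - r * Hbar) \<le> x" unfolding x using S.P1_ge[OF r vi Li] by simp
    qed
    have le: "Inf SS \<le> ereal (\<phi> y - r * Hbar)"
    proof (rule ereal_le_epsilon2)
      fix e :: real assume e: "e > 0"
      define \<epsilon> where "\<epsilon> = e / (r + 1)"
      have eps: "\<epsilon> > 0" unfolding \<epsilon>_def using e r by simp
      obtain \<kappa>0 where k0: "\<kappa>0 > 0" and P: "\<forall>\<kappa>\<in>{0<..\<kappa>0}. \<forall>b V :: real^'d \<Rightarrow> real^'d.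
        (\<forall>x w. \<phi> (x + b x) + (norm (b x))\<^sup>2 / (2 * \<kappa>\<^sup>2) \<le> \<phi> (x + w) + (norm w)\<^sup>2 / (2 * \<kappa>\<^sup>2)) \<and>
        (\<forall>x w. (- ((1 / \<kappa>\<^sup>2) *\<^sub>R (- b x))) \<bullet> w - L (x + b x) w
            \<le> (- ((1 / \<kappa>\<^sup>2) *\<^sub>R (- b x))) \<bullet> V x - L (x + b x) (V x))
        \<longrightarrow> (\<forall>r>0. \<forall>y. \<exists>\<rho>>0. \<forall>n t. is_partition r n t \<and> fineness n t < \<rho> \<longrightarrow>
              feedback_cost L \<phi> V y r n t \<le> \<phi> y - Hbar * r + (r + 1) * \<epsilon>)"
        using S.P2_main[OF eps] by blast
      obtain B where B: "\<And>x. \<bar>\<phi> x\<bar> \<le> B" using S.phi_bounded by blast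
      have "\<forall>x. \<exists>bx. \<forall>w. \<phi> (x + bx) + (norm bx)\<^sup>2 / (2 * \<kappa>0\<^sup>2) \<le> \<phi> (x + w) + (norm w)\<^sup>2 / (2 * \<kappa>0\<^sup>2)"
        using infconv_exists[OF S.phi_cont B k0] by blast
      then obtain b where bmin: "\<And>x w. \<phi> (x + b x) + (norm (b x))\<^sup>2 / (2 * \<kappa>0\<^sup>2) \<le> \<phi> (x + w) + (norm w)\<^sup>2 / (2 * \<kappa>0\<^sup>2)"
        by metis
      have "\<forall>x. \<exists>Vx. \<forall>w. (- ((1 / \<kappa>0\<^sup>2) *\<^sub>R (- b x))) \<bullet> w - L (x + b x) w
            \<le> (- ((1 / \<kappa>0\<^sup>2) *\<^sub>R (- b x))) \<bullet> Vx - L (x + b x) Vx"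
        using S.argmax_exists by blast
      then obtain V where vmax: "\<And>x w. (- ((1 / \<kappa>0\<^sup>2) *\<^sub>R (- b x))) \<bullet> w - L (x + b x) w
            \<le> (- ((1 / \<kappa>0\<^sup>2) *\<^sub>R (- b x))) \<bullet> V x - L (x + b x) (V x)"
        by metis
      have "\<kappa>0 \<in> {0<..\<kappa>0}" using k0 by simp
      note Q = spec[where x = V, OF spec[where x = b, OF bspec[OF P \<open>\<kappa>0 \<in> {0<..\<kappa>0}\<close>]]]
      note Q2 = mp[OF Q conjI[OF allI[OF allI[OF bmin]] allI[OF allI[OF vmax]]]]
      have "\<exists>\<rho>>0. \<forall>n t. is_partition r n t \<and> fineness n t < \<rho> \<longrightarrow>
              feedback_cost L \<phi> V y r n t \<le> \<phi> y - Hbar * r + (r + 1) * \<epsilon>"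
        using spec[where x = y, OF mp[OF spec[where x = r, OF Q2] r]] .
      then obtain \<rho> where rho: "\<rho> > 0" and
        cost: "\<And>n t. is_partition r n t \<Longrightarrow> fineness n t < \<rho> \<Longrightarrow>
              feedback_cost L \<phi> V y r n t \<le> \<phi> y - Hbar * r + (r + 1) * \<epsilon>"
        by blast
      define N :: nat where "N = nat (ceiling (r / \<rho>)) + 1"
      have N: "N > 0" unfolding N_def by simp
      have hN: "r / N < \<rho>"
      proof -
        have "r / \<rho> < N" unfolding N_def by linarith
        then have "r < N * \<rho>" using rho by (simp add: divide_less_eq)
        then show ?thesis using N by (simp add: divide_less_eq mult.commute)
      qed
      define t where "t = (\<lambda>i::nat. r * i / N)"
      have part: "is_partition r N t" and fin: "fineness N t = r / N"
        unfolding t_def using uniform_partition[OF r N] by auto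
      have re: "(r + 1) * \<epsilon> = e" unfolding \<epsilon>_def using r by simp
      have c: "feedback_cost L \<phi> V y r N t \<le> \<phi> y - r * Hbar + e"
        using cost[OF part] fin hN re by (simp add: algebra_simps)
      note fc = S.feedback_control[OF part r, where V = V and y = y]
      have "ereal (feedback_cost L \<phi> V y r N t) \<in> SS"
        unfolding SS_def
        by (rule CollectI, rule exI[of _ "feedback_v V y N t"]) (use fc in simp)
      then have "Inf SS \<le> ereal (feedback_cost L \<phi> V y r N t)" by (rule Inf_lower)
      also have "\<dots> \<le> ereal (\<phi> y - r * Hbar) + ereal e" using c by simp
      finally show "Inf SS \<le> ereal (\<phi> y - r * Hbar) + ereal e" .
    qed
    show ?thesis unfolding lo by (rule antisym[OF le ge])
  qed
  have part2: "\<forall>\<epsilon>>0. \<exists>\<kappa>0>0. \<forall>\<kappa>\<in>{0<..\<kappa>0}. \<forall>r>0. \<forall>y.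
              limsup_fine r (feedback_cost L \<phi> (vv \<kappa>) y r)
                \<le> ereal (\<phi> y - Hbar * r + (r + 1) * \<epsilon>)"
    if hyp: "\<forall>\<kappa>>0. periodic (b \<kappa>) \<and> periodic (vv \<kappa>) \<and>
          (\<forall>x. (\<forall>w. \<phi> (x + b \<kappa> x) + (norm (b \<kappa> x))\<^sup>2 / (2 * \<kappa>\<^sup>2) \<le> \<phi> (x + w) + (norm w)\<^sup>2 / (2 * \<kappa>\<^sup>2)) \<and>
               (let p = (1 / \<kappa>\<^sup>2) *\<^sub>R (- b \<kappa> x) in
                 \<forall>w. - p \<bullet> w - L (x + b \<kappa> x) w \<le> - p \<bullet> vv \<kappa> x - L (x + b \<kappa> x) (vv \<kappa> x)))"
    for b vv :: "real \<Rightarrow> real^'d \<Rightarrow> real^'d"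
  proof (intro allI impI)
    fix \<epsilon> :: real assume eps: "\<epsilon> > 0"
    obtain \<kappa>0 where k0: "\<kappa>0 > 0" and P: "\<forall>\<kappa>\<in>{0<..\<kappa>0}. \<forall>b V :: real^'d \<Rightarrow> real^'d.
        (\<forall>x w. \<phi> (x + b x) + (norm (b x))\<^sup>2 / (2 * \<kappa>\<^sup>2) \<le> \<phi> (x + w) + (norm w)\<^sup>2 / (2 * \<kappa>\<^sup>2)) \<and>
        (\<forall>x w. (- ((1 / \<kappa>\<^sup>2) *\<^sub>R (- b x))) \<bullet> w - L (x + b x) w
            \<le> (- ((1 / \<kappa>\<^sup>2) *\<^sub>R (- b x))) \<bullet> V x - L (x + b x) (V x))
        \<longrightarrow> (\<forall>r>0. \<forall>y. \<exists>\<rho>>0. \<forall>n t. is_partition r n t \<and> fineness n t < \<rho> \<longrightarrow>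
              feedback_cost L \<phi> V y r n t \<le> \<phi> y - Hbar * r + (r + 1) * \<epsilon>)"
      using S.P2_main[OF eps] by blast
    show "\<exists>\<kappa>0>0. \<forall>\<kappa>\<in>{0<..\<kappa>0}. \<forall>r>0. \<forall>y.
              limsup_fine r (feedback_cost L \<phi> (vv \<kappa>) y r)
                \<le> ereal (\<phi> y - Hbar * r + (r + 1) * \<epsilon>)"
    proof (intro exI[of _ \<kappa>0] conjI k0 ballI allI impI)
      fix \<kappa> r :: real and y :: "real^'d"
      assume k: "\<kappa> \<in> {0<..\<kappa>0}" and r: "r > 0"
      have kpos: "\<kappa> > 0" using k by simp
      have h1: "\<forall>x w. \<phi> (x + b \<kappa> x) + (norm (b \<kappa> x))\<^sup>2 / (2 * \<kappa>\<^sup>2) \<le> \<phi> (x + w) + (norm w)\<^sup>2 / (2 * \<kappa>\<^sup>2)"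
        using hyp kpos by blast
      have h2: "\<forall>x w. (- ((1 / \<kappa>\<^sup>2) *\<^sub>R (- b \<kappa> x))) \<bullet> w - L (x + b \<kappa> x) w
            \<le> (- ((1 / \<kappa>\<^sup>2) *\<^sub>R (- b \<kappa> x))) \<bullet> vv \<kappa> x - L (x + b \<kappa> x) (vv \<kappa> x)"
      proof (intro allI)
        fix x w
        have "let p = (1 / \<kappa>\<^sup>2) *\<^sub>R (- b \<kappa> x) in
                 \<forall>w. - p \<bullet> w - L (x + b \<kappa> x) w \<le> - p \<bullet> vv \<kappa> x - L (x + b \<kappa> x) (vv \<kappa> x)"
          using hyp kpos by blast
        then show "(- ((1 / \<kappa>\<^sup>2) *\<^sub>R (- b \<kappa> x))) \<bullet> w - L (x + b \<kappa> x) w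
            \<le> (- ((1 / \<kappa>\<^sup>2) *\<^sub>R (- b \<kappa> x))) \<bullet> vv \<kappa> x - L (x + b \<kappa> x) (vv \<kappa> x)"
          unfolding Let_def by blast
      qed
      note Q = spec[where x = "vv \<kappa>", OF spec[where x = "b \<kappa>", OF bspec[OF P k]]]
      note Q2 = mp[OF Q conjI[OF h1 h2]]
      have "\<exists>\<rho>>0. \<forall>n t. is_partition r n t \<and> fineness n t < \<rho> \<longrightarrow>
              feedback_cost L \<phi> (vv \<kappa>) y r n t \<le> \<phi> y - Hbar * r + (r + 1) * \<epsilon>"
        using spec[where x = y, OF mp[OF spec[where x = r, OF Q2] r]] .
      then obtain \<rho> where rho: "\<rho> > 0" and
        cost: "\<And>n t. is_partition r n t \<Longrightarrow> fineness n t < \<rho> \<Longrightarrow>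
              feedback_cost L \<phi> (vv \<kappa>) y r n t \<le> \<phi> y - Hbar * r + (r + 1) * \<epsilon>"
        by blast
      have "Sup {ereal (feedback_cost L \<phi> (vv \<kappa>) y r n t) | n t. is_partition r n t \<and> fineness n t < \<rho>}
          \<le> ereal (\<phi> y - Hbar * r + (r + 1) * \<epsilon>)"
        by (rule Sup_least) (use cost in auto)
      then show "limsup_fine r (feedback_cost L \<phi> (vv \<kappa>) y r) \<le> ereal (\<phi> y - Hbar * r + (r + 1) * \<epsilon>)"
        unfolding limsup_fine_def using rho by (intro INF_lower2[of \<rho>]) auto
    qed
  qed
  show ?thesis using part1 part2 by blast
qed


end
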